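(* Let $F$ be a fixed connected graph. Then, as $n\to\infty$, $$\binom{n}{2}\le L(n,F)+\mathrm{exa}_1(n,F)\le \binom{n}{2}+O(n).$$ Consequently, if $F$ is not a tree, then $L(n,F)=\binom{n}{2}-(1+o(1))\,\mathrm{ex}(n,F)$.
   Context: $\mathrm{exa}_1(n,F)$ is the largest number of edges of a simple graph on $n$ vertices containing exactly one subgraph isomorphic to $F$; $\mathrm{ex}(n,F)$ is the largest number of edges of a graph on $n$ vertices containing no subgraph isomorphic to $F$. Search game: given a vertex set $V$ with $|V|=n$, an unknown edge set $E_0$ of pairs from $V$ is hidden such that the graph $(V,E_0)$ is isomorphic to $F$ together with $n-|V(F)|$ isolated vertices. A query is a pair of vertices of $V$, answered YES if it belongs to $E_0$ and NO otherwise; queries may be chosen adaptively. The game ends when $E_0$ is determined, i.e. exactly one such edge set is consistent with all answers. $L(n,F)$ is the minimum, over all questioning strategies, of the maximum over all possible $E_0$ of the number of queries asked. *)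

theory Defs
  imports Complex_Main
begin

definition vpairs :: "'a set \<Rightarrow> 'a set set" where
  "vpairs V = {e. \<exists>u v. e = {u, v} \<and> u \<in> V \<and> v \<in> V \<and> u \<noteq> v}"

definition simple_graph :: "'a set \<Rightarrow> 'a set set \<Rightarrow> bool" where
  "simple_graph V E \<longleftrightarrow> finite V \<and> E \<subseteq> vpairs V"

definition graph_connected :: "'a set \<Rightarrow> 'a set set \<Rightarrow> bool" where
  "graph_connected V E \<longleftrightarrow> V \<noteq> {} \<and>
     (\<forall>u\<in>V. \<forall>v\<in>V. (u, v) \<in> {(x, y). {x, y} \<in> E}\<^sup>*)"

definition has_cycle :: "'a set \<Rightarrow> 'a set set \<Rightarrow> bool" where
  "has_cycle V E \<longleftrightarrow> (\<exists>vs. length vs \<ge> 3 \<and> distinct vs \<and> set vs \<subseteq> V \<and>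
     (\<forall>i < length vs. {vs ! i, vs ! ((i + 1) mod length vs)} \<in> E))"

definition is_tree :: "'a set \<Rightarrow> 'a set set \<Rightarrow> bool" where
  "is_tree V E \<longleftrightarrow> graph_connected V E \<and> \<not> has_cycle V E"

definition graph_iso :: "'a set \<Rightarrow> 'a set set \<Rightarrow> 'b set \<Rightarrow> 'b set set \<Rightarrow> bool" where
  "graph_iso V1 E1 V2 E2 \<longleftrightarrow> (\<exists>f. bij_betw f V1 V2 \<and>
     (\<forall>u\<in>V1. \<forall>v\<in>V1. {u, v} \<in> E1 \<longleftrightarrow> {f u, f v} \<in> E2))"

definition copies :: "nat \<Rightarrow> nat set set \<Rightarrow> 'b set \<Rightarrow> 'b set set \<Rightarrow> (nat set \<times> nat set set) set" where
  "copies n E VF EF = {(W, D). W \<subseteq> {0..<n} \<and> D \<subseteq> E \<and> D \<subseteq> vpairs W \<and> graph_iso W D VF EF}"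

definition exa1 :: "nat \<Rightarrow> 'b set \<Rightarrow> 'b set set \<Rightarrow> nat" where
  "exa1 n VF EF = Max {card E | E. E \<subseteq> vpairs {0..<n} \<and> card (copies n E VF EF) = 1}"

definition ex_num :: "nat \<Rightarrow> 'b set \<Rightarrow> 'b set set \<Rightarrow> nat" where
  "ex_num n VF EF = Max {card E | E. E \<subseteq> vpairs {0..<n} \<and> copies n E VF EF = {}}"

text \<open>Search game. Possible hidden edge sets on V = {0..<n}: (V,E0) is isomorphic to
  F together with n - |V(F)| isolated vertices (disjoint union built on type 'b + nat).\<close>
definition hidden :: "nat \<Rightarrow> 'b set \<Rightarrow> 'b set set \<Rightarrow> nat set set set" where
  "hidden n VF EF = {E0. E0 \<subseteq> vpairs {0..<n} \<and>
     graph_iso {0..<n} E0 (Inl ` VF \<union> Inr ` {0..<n - card VF}) ((`) Inl ` EF)}"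

text \<open>Adaptive questioning strategies as decision trees: Ask e Tyes Tno.\<close>
datatype qtree = Done | Ask "nat set" qtree qtree

text \<open>solves n T C: strategy T, started when C is the set of edge sets still consistent,
  only asks pairs of vertices and stops only when the hidden set is determined.\<close>
fun solves :: "nat \<Rightarrow> qtree \<Rightarrow> nat set set set \<Rightarrow> bool" where
  "solves n Done C = (\<forall>A\<in>C. \<forall>B\<in>C. A = B)"
| "solves n (Ask e T1 T2) C = (e \<in> vpairs {0..<n} \<and>
     solves n T1 {E \<in> C. e \<in> E} \<and> solves n T2 {E \<in> C. e \<notin> E})"

fun cost :: "qtree \<Rightarrow> nat set set \<Rightarrow> nat" where
  "cost Done E0 = 0"
| "cost (Ask e T1 T2) E0 = Suc (if e \<in> E0 then cost T1 E0 else cost T2 E0)"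

definition Lgame :: "nat \<Rightarrow> 'b set \<Rightarrow> 'b set set \<Rightarrow> nat" where
  "Lgame n VF EF = (LEAST k. \<exists>T. solves n T (hidden n VF EF) \<and>
      (\<forall>E0 \<in> hidden n VF EF. cost T E0 \<le> k))"

end

theory Submission
  imports Defs "HOL-Library.FuncSet"
begin

definition good :: "nat \<Rightarrow> nat \<Rightarrow> nat set set set \<Rightarrow> bool" where
  "good n k C \<longleftrightarrow> (\<exists>T. solves n T C \<and> (\<forall>E\<in>C. cost T E \<le> k))"

lemma solves_subset: "solves n T C \<Longrightarrow> C' \<subseteq> C \<Longrightarrow> solves n T C'"
proof (induction T arbitrary: C C')
  case Done thus ?case by auto
next
  case (Ask e T1 T2)
  have "{E \<in> C'. e \<in> E} \<subseteq> {E \<in> C. e \<in> E}" "{E \<in> C'. e \<notin> E} \<subseteq> {E \<in> C. e \<notin> E}"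
    using Ask.prems by auto
  thus ?case using Ask by auto
qed

lemma good_mono: "good n k C \<Longrightarrow> k \<le> k' \<Longrightarrow> C' \<subseteq> C \<Longrightarrow> good n k' C'"
  unfolding good_def by (meson order_trans solves_subset subsetD)

lemma good_triv: "(\<forall>A\<in>C. \<forall>B\<in>C. A = B) \<Longrightarrow> good n k C"
  unfolding good_def by (rule exI[of _ Done]) auto

lemma good_ask: "e \<in> vpairs {0..<n} \<Longrightarrow> good n k {E\<in>C. e\<in>E} \<Longrightarrow> good n k {E\<in>C. e\<notin>E}
  \<Longrightarrow> good n (Suc k) C"
proof -
  assume e: "e \<in> vpairs {0..<n}" and g1: "good n k {E\<in>C. e\<in>E}" and g2: "good n k {E\<in>C. e\<notin>E}"
  from g1 obtain T1 where T1: "solves n T1 {E\<in>C. e\<in>E}" "\<forall>E\<in>{E\<in>C. e\<in>E}. cost T1 E \<le> k"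
    unfolding good_def by blast
  from g2 obtain T2 where T2: "solves n T2 {E\<in>C. e\<notin>E}" "\<forall>E\<in>{E\<in>C. e\<notin>E}. cost T2 E \<le> k"
    unfolding good_def by blast
  show ?thesis unfolding good_def
    by (rule exI[of _ "Ask e T1 T2"]) (use e T1 T2 in auto)
qed

lemma good_list: "set qs \<subseteq> vpairs {0..<n} \<Longrightarrow> (\<forall>Y. good n k {E\<in>C. E \<inter> set qs = Y})
  \<Longrightarrow> good n (length qs + k) C"
proof (induction qs arbitrary: C)
  case Nil
  then show ?case using Nil.prems(2)[rule_format, of "{}"] by simp
next
  case (Cons q qs)
  have q: "q \<in> vpairs {0..<n}" using Cons.prems by auto
  have 1: "good n (length qs + k) {E\<in>C. q\<in>E}"
  proof (rule Cons.IH)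
    show "set qs \<subseteq> vpairs {0..<n}" using Cons.prems by auto
    show "\<forall>Y. good n k {E \<in> {E \<in> C. q \<in> E}. E \<inter> set qs = Y}"
    proof
      fix Y
      show "good n k {E \<in> {E \<in> C. q \<in> E}. E \<inter> set qs = Y}"
        by (rule good_mono[OF Cons.prems(2)[rule_format, of "insert q Y"]]) auto
    qed
  qed
  have 2: "good n (length qs + k) {E\<in>C. q\<notin>E}"
  proof (rule Cons.IH)
    show "set qs \<subseteq> vpairs {0..<n}" using Cons.prems by auto
    show "\<forall>Y. good n k {E \<in> {E \<in> C. q \<notin> E}. E \<inter> set qs = Y}"
    proof
      fix Y
      show "good n k {E \<in> {E \<in> C. q \<notin> E}. E \<inter> set qs = Y}"
        by (rule good_mono[OF Cons.prems(2)[rule_format, of "Y"]]) auto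
    qed
  qed
  show ?case using good_ask[OF q 1 2] by simp
qed

lemma good_phase1: "set qs \<subseteq> vpairs {0..<n} \<Longrightarrow> good n k {E\<in>C. E \<inter> set qs = {}}
  \<Longrightarrow> (\<forall>q\<in>set qs. good n k {E\<in>C. q\<in>E}) \<Longrightarrow> good n (length qs + k) C"
proof (induction qs arbitrary: C)
  case Nil
  then show ?case by simp
next
  case (Cons q qs)
  have q: "q \<in> vpairs {0..<n}" using Cons.prems by auto
  have 1: "good n (length qs + k) {E\<in>C. q\<in>E}"
    using Cons.prems(3) good_mono by auto
  have 2: "good n (length qs + k) {E\<in>C. q\<notin>E}"
  proof (rule Cons.IH)
    show "set qs \<subseteq> vpairs {0..<n}" using Cons.prems by auto
    show "good n k {E \<in> {E \<in> C. q \<notin> E}. E \<inter> set qs = {}}"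
      by (rule good_mono[OF Cons.prems(2)]) auto
    show "\<forall>q'\<in>set qs. good n k {E \<in> {E \<in> C. q \<notin> E}. q' \<in> E}"
      using Cons.prems(3) by (auto intro: good_mono)
  qed
  show ?case using good_ask[OF q 1 2] by simp
qed

lemma adversary: "solves n T C \<Longrightarrow> C \<noteq> {} \<Longrightarrow> \<exists>E0\<in>C. \<exists>N. N \<subseteq> vpairs {0..<n} \<and> finite N \<and>
   card N \<le> cost T E0 \<and> E0 \<inter> N = {} \<and> (\<forall>E\<in>C. E \<inter> N = {} \<longrightarrow> E = E0)"
proof (induction T arbitrary: C)
  case Done
  then obtain E0 where "E0 \<in> C" by auto
  thus ?case using Done by (intro bexI[of _ E0] exI[of _ "{}"]) auto
next
  case (Ask e T1 T2)
  show ?case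
  proof (cases "\<forall>E\<in>C. e \<in> E")
    case True
    hence eq: "{E\<in>C. e\<in>E} = C" by auto
    have s1: "solves n T1 C" using Ask.prems eq by auto
    from Ask.IH(1)[OF s1 Ask.prems(2)] obtain E0 N where
      h1: "E0 \<in> C" and h2: "N \<subseteq> vpairs {0..<n}" and fN: "finite N"
      and h3: "card N \<le> cost T1 E0" and h4: "E0 \<inter> N = {}"
      and h5: "\<forall>E\<in>C. E \<inter> N = {} \<longrightarrow> E = E0"
      by blast
    have "cost (Ask e T1 T2) E0 = Suc (cost T1 E0)" using h1 True by simp
    hence "card N \<le> cost (Ask e T1 T2) E0" using h3 by simp
    thus ?thesis using h1 h2 fN h4 h5 by blast
  next
    case False
    hence ne: "{E\<in>C. e\<notin>E} \<noteq> {}" by auto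
    have s2: "solves n T2 {E\<in>C. e\<notin>E}" and ev: "e \<in> vpairs {0..<n}" using Ask.prems by auto
    from Ask.IH(2)[OF s2 ne] obtain E0 N where
      h1: "E0 \<in> {E\<in>C. e\<notin>E}" and h2: "N \<subseteq> vpairs {0..<n}" and fN: "finite N"
      and h3: "card N \<le> cost T2 E0" and h4: "E0 \<inter> N = {}"
      and h5: "\<forall>E\<in>{E\<in>C. e\<notin>E}. E \<inter> N = {} \<longrightarrow> E = E0"
      by blast
    have c: "card (insert e N) \<le> Suc (card N)" using fN by (simp add: card_insert_if)
    have "cost (Ask e T1 T2) E0 = Suc (cost T2 E0)" using h1 by simp
    hence 1: "card (insert e N) \<le> cost (Ask e T1 T2) E0" using c h3 by simp
    have 2: "E0 \<inter> insert e N = {}" using h1 h4 by blast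
    have 3: "\<forall>E\<in>C. E \<inter> insert e N = {} \<longrightarrow> E = E0" using h5 by blast
    have 4: "insert e N \<subseteq> vpairs {0..<n}" using h2 ev by blast
    have "E0 \<in> C" using h1 by blast
    thus ?thesis using 1 2 3 4 fN by blast
  qed
qed


lemma vpairs_iff: "x \<in> vpairs V \<longleftrightarrow> (\<exists>u v. x = {u,v} \<and> u \<in> V \<and> v \<in> V \<and> u \<noteq> v)"
  unfolding vpairs_def by auto

lemma vpairs_mono: "V \<subseteq> W \<Longrightarrow> vpairs V \<subseteq> vpairs W"
  unfolding vpairs_def by blast

lemma vpairs_sub: "x \<in> vpairs V \<Longrightarrow> x \<subseteq> V"
  unfolding vpairs_def by auto

lemma vpairs_eq: "vpairs V = {A. A \<subseteq> V \<and> card A = 2}"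
  unfolding vpairs_def by (auto simp: card_2_iff)

lemma card_vpairs: "finite V \<Longrightarrow> card (vpairs V) = card V choose 2"
  unfolding vpairs_eq by (simp add: n_subsets)

lemma finite_vpairs: "finite V \<Longrightarrow> finite (vpairs V)"
  unfolding vpairs_eq by (rule finite_subset[of _ "Pow V"]) auto

locale FG =
  fixes VF :: "'b set" and EF :: "'b set set"
  assumes finVF: "finite VF" and subEF: "EF \<subseteq> vpairs VF"
    and connF: "graph_connected VF EF" and neEF: "EF \<noteq> {}"
begin

definition emb :: "('b \<Rightarrow> nat) \<Rightarrow> nat set set" where
  "emb g = (\<lambda>e. g ` e) ` EF"

definition Hc :: "nat \<Rightarrow> nat set set set" where
  "Hc n = {emb g | g. inj_on g VF \<and> g ` VF \<subseteq> {0..<n}}"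

definition cnt :: "nat \<Rightarrow> nat set set \<Rightarrow> nat" where
  "cnt n E = card {D \<in> Hc n. D \<subseteq> E}"

lemma EF_pair: "e \<in> EF \<Longrightarrow> \<exists>a b. e = {a,b} \<and> a \<in> VF \<and> b \<in> VF \<and> a \<noteq> b"
  using subEF vpairs_iff by blast

lemma noiso: "a \<in> VF \<Longrightarrow> \<exists>e\<in>EF. a \<in> e"
proof -
  assume a: "a \<in> VF"
  obtain e0 where e0: "e0 \<in> EF" using neEF by auto
  then obtain x y where xy: "e0 = {x,y}" "x \<in> VF" "y \<in> VF" "x \<noteq> y" using EF_pair by blast
  have "(a, x) \<in> {(x, y). {x, y} \<in> EF}\<^sup>*" using connF a xy unfolding graph_connected_def by auto
  thus ?thesis
  proof (cases rule: converse_rtranclE)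
    case base thus ?thesis using e0 xy by auto
  next
    case (step z) thus ?thesis by auto
  qed
qed

lemma emb_union: "\<Union>(emb g) = g ` VF"
proof
  show "\<Union>(emb g) \<subseteq> g ` VF" unfolding emb_def using subEF vpairs_sub by blast
  show "g ` VF \<subseteq> \<Union>(emb g)" unfolding emb_def using noiso by blast
qed

lemma emb_vpairs: "inj_on g VF \<Longrightarrow> emb g \<subseteq> vpairs (g ` VF)"
proof
  fix x assume inj: "inj_on g VF" and "x \<in> emb g"
  then obtain e where "e \<in> EF" "x = g ` e" unfolding emb_def by auto
  then obtain a b where ab: "e = {a,b}" "a \<in> VF" "b \<in> VF" "a \<noteq> b" using EF_pair by blast
  have x: "x = {g a, g b}" using \<open>x = g ` e\<close> ab by simp
  have "g a \<noteq> g b" using inj ab by (simp add: inj_on_eq_iff)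
  thus "x \<in> vpairs (g ` VF)" unfolding vpairs_iff using x ab by blast
qed

lemma emb_card: "inj_on g VF \<Longrightarrow> card (emb g) = card EF"
  unfolding emb_def
proof (rule card_image)
  assume "inj_on g VF"
  have "\<Union>EF \<subseteq> VF" using subEF vpairs_sub by blast
  thus "inj_on ((`) g) EF" using inj_on_image \<open>inj_on g VF\<close> inj_on_subset by blast
qed

lemma emb_conn: assumes "x \<in> \<Union>(emb g)" "y \<in> \<Union>(emb g)"
  shows "(x, y) \<in> {(x, y). {x, y} \<in> emb g}\<^sup>*"
proof -
  obtain a b where ab: "a \<in> VF" "b \<in> VF" "x = g a" "y = g b" using assms emb_union by auto
  have "(a, b) \<in> {(x, y). {x, y} \<in> EF}\<^sup>*" using connF ab unfolding graph_connected_def by auto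
  hence "(g a, g b) \<in> {(x, y). {x, y} \<in> emb g}\<^sup>*"
  proof (induction rule: rtrancl_induct)
    case base thus ?case by simp
  next
    case (step c d)
    hence "{c, d} \<in> EF" by simp
    hence "g ` {c, d} \<in> emb g" unfolding emb_def by (rule imageI)
    hence "(g c, g d) \<in> {(x, y). {x, y} \<in> emb g}" by simp
    with step.IH show ?case by (rule rtrancl_into_rtrancl)
  qed
  thus ?thesis using ab by simp
qed

lemma Hc_vpairs: "D \<in> Hc n \<Longrightarrow> D \<subseteq> vpairs {0..<n}"
  unfolding Hc_def using emb_vpairs vpairs_mono by blast

lemma Hc_card_union: "D \<in> Hc n \<Longrightarrow> card (\<Union>D) = card VF"
proof -
  assume "D \<in> Hc n"
  then obtain g where "D = emb g" "inj_on g VF" unfolding Hc_def by auto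
  thus ?thesis by (simp add: emb_union card_image)
qed

lemma Hc_card: "D \<in> Hc n \<Longrightarrow> card D = card EF"
  unfolding Hc_def using emb_card by blast

lemma Hc_conn: "D \<in> Hc n \<Longrightarrow> x \<in> \<Union>D \<Longrightarrow> y \<in> \<Union>D \<Longrightarrow> (x, y) \<in> {(x, y). {x, y} \<in> D}\<^sup>*"
  unfolding Hc_def using emb_conn by blast

lemma Hc_ne: "D \<in> Hc n \<Longrightarrow> D \<noteq> {}"
  unfolding Hc_def emb_def using neEF by auto

lemma Hc_sub: "Hc n \<subseteq> (\<lambda>g. emb g) ` (PiE VF (\<lambda>_. {0..<n}))"
proof
  fix D assume "D \<in> Hc n"
  then obtain g where g: "D = emb g" "inj_on g VF" "g ` VF \<subseteq> {0..<n}" unfolding Hc_def by auto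
  have "emb (restrict g VF) = emb g" unfolding emb_def
    using subEF vpairs_sub by (intro image_cong refl) (auto simp: restrict_def split: if_splits)
  moreover have "restrict g VF \<in> PiE VF (\<lambda>_. {0..<n})" using g by auto
  ultimately show "D \<in> (\<lambda>g. emb g) ` (PiE VF (\<lambda>_. {0..<n}))" using g by (metis image_eqI)
qed

lemma Hc_finite: "finite (Hc n)"
proof (rule finite_subset[OF Hc_sub])
  show "finite ((\<lambda>g. emb g) ` (PiE VF (\<lambda>_. {0..<n})))"
    using finVF by (intro finite_imageI finite_PiE) auto
qed

lemma Hc_card_le: "card (Hc n) \<le> n ^ card VF"
proof -
  have "card (Hc n) \<le> card ((\<lambda>g. emb g) ` (PiE VF (\<lambda>_. {0..<n})))"
    using Hc_sub finVF by (intro card_mono finite_imageI finite_PiE) auto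
  also have "\<dots> \<le> card (PiE VF (\<lambda>_. {0..<n}))" by (rule card_image_le) (use finVF in \<open>auto intro: finite_PiE\<close>)
  also have "\<dots> = n ^ card VF" using finVF by (simp add: card_PiE)
  finally show ?thesis .
qed

end

context FG begin

lemma copies_char: "(W, D) \<in> copies n E VF EF \<longleftrightarrow> D \<in> Hc n \<and> D \<subseteq> E \<and> W = \<Union>D"
proof
  assume h: "(W, D) \<in> copies n E VF EF"
  hence W: "W \<subseteq> {0..<n}" "D \<subseteq> E" "D \<subseteq> vpairs W" and iso: "graph_iso W D VF EF"
    by (auto simp: copies_def)
  from iso obtain f where bf: "bij_betw f W VF" and fi: "\<forall>u\<in>W. \<forall>v\<in>W. {u,v}\<in>D \<longleftrightarrow> {f u, f v} \<in> EF"
    unfolding graph_iso_def by blast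
  define g where "g = inv_into W f"
  have bg: "bij_betw g VF W" unfolding g_def by (rule bij_betw_inv_into[OF bf])
  have gf: "\<And>u. u \<in> W \<Longrightarrow> g (f u) = u" using bf by (simp add: g_def bij_betw_inv_into_left)
  have fg: "\<And>a. a \<in> VF \<Longrightarrow> f (g a) = a" using bf by (simp add: g_def bij_betw_inv_into_right)
  have gW: "\<And>a. a\<in>VF \<Longrightarrow> g a \<in> W" using bg bij_betwE by blast
  have De: "D = emb g"
  proof
    show "D \<subseteq> emb g"
    proof
      fix d assume "d \<in> D"
      hence "d \<in> vpairs W" using W(3) by blast
      then obtain u w where uw: "d = {u,w}" "u\<in>W" "w\<in>W" "u\<noteq>w" unfolding vpairs_iff by blast
      have "{u,w} \<in> D \<longleftrightarrow> {f u, f w} \<in> EF" using fi uw(2,3) by blast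
      hence 1: "{f u, f w} \<in> EF" using \<open>d\<in>D\<close> uw(1) by simp
      have 2: "d = g ` {f u, f w}" using gf uw by simp
      show "d \<in> emb g" unfolding emb_def using 2 1 by (rule image_eqI)
    qed
    show "emb g \<subseteq> D"
    proof
      fix x assume "x \<in> emb g"
      then obtain e where e: "e\<in>EF" "x = g`e" unfolding emb_def by auto
      then obtain a b where ab: "e = {a,b}" "a \<in> VF" "b \<in> VF" "a \<noteq> b" using EF_pair by blast
      have "{f (g a), f (g b)} \<in> EF" using fg ab e by simp
      hence "{g a, g b} \<in> D" using fi gW ab by blast
      thus "x \<in> D" using e ab by simp
    qed
  qed
  have "inj_on g VF" "g ` VF = W" using bg by (auto simp: bij_betw_def)
  hence "D \<in> Hc n" unfolding Hc_def using De W(1) by blast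
  moreover have "W = \<Union>D" using De emb_union \<open>g ` VF = W\<close> by simp
  ultimately show "D \<in> Hc n \<and> D \<subseteq> E \<and> W = \<Union>D" using W by simp
next
  assume h: "D \<in> Hc n \<and> D \<subseteq> E \<and> W = \<Union>D"
  then obtain g where g: "D = emb g" "inj_on g VF" "g ` VF \<subseteq> {0..<n}" unfolding Hc_def by auto
  have Wg: "W = g ` VF" using h g emb_union by simp
  define f where "f = inv_into VF g"
  have bf: "bij_betw f W VF" unfolding f_def Wg
    by (rule bij_betw_inv_into[OF inj_on_imp_bij_betw[OF g(2)]])
  have iso: "\<forall>u\<in>W. \<forall>w\<in>W. {u,w}\<in>D \<longleftrightarrow> {f u, f w} \<in> EF"
  proof (intro ballI)
    fix u w assume "u \<in> W" "w \<in> W"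
    then obtain a b where ab: "a \<in> VF" "b \<in> VF" "u = g a" "w = g b" using Wg by auto
    have fab: "f u = a" "f w = b" using ab g(2) by (auto simp: f_def)
    show "{u,w}\<in>D \<longleftrightarrow> {f u, f w} \<in> EF"
    proof
      assume "{u,w} \<in> D"
      then obtain e where e: "e \<in> EF" "{g a, g b} = g ` e" using g ab unfolding emb_def by auto
      have "e \<subseteq> VF" using e subEF vpairs_sub by blast
      hence "e = {a,b}" using e(2) g(2) ab inj_on_image_eq_iff[of g VF e "{a,b}"] by auto
      thus "{f u, f w} \<in> EF" using e fab by simp
    next
      assume "{f u, f w} \<in> EF"
      hence "{a,b} \<in> EF" using fab by simp
      hence "g ` {a,b} \<in> D" unfolding g(1) emb_def by (rule imageI)
      thus "{u,w} \<in> D" using ab by simp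
    qed
  qed
  have "D \<subseteq> vpairs W" using emb_vpairs g Wg by simp
  thus "(W, D) \<in> copies n E VF EF" unfolding copies_def graph_iso_def
    using h g Wg bf iso by auto
qed

lemma copies_eq: "copies n E VF EF = (\<lambda>D. (\<Union>D, D)) ` {D \<in> Hc n. D \<subseteq> E}"
proof (rule set_eqI)
  fix x :: "nat set \<times> nat set set"
  obtain W D where x: "x = (W, D)" by (cases x)
  show "x \<in> copies n E VF EF \<longleftrightarrow> x \<in> (\<lambda>D. (\<Union>D, D)) ` {D \<in> Hc n. D \<subseteq> E}"
    unfolding x copies_char by auto
qed

lemma card_copies: "card (copies n E VF EF) = cnt n E"
  unfolding copies_eq cnt_def by (rule card_image) (auto intro: inj_onI)

lemma Hc_hidden: "card VF \<le> n \<Longrightarrow> Hc n \<subseteq> hidden n VF EF"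
proof
  fix D assume v: "card VF \<le> n" and "D \<in> Hc n"
  then obtain g where g: "D = emb g" "inj_on g VF" "g ` VF \<subseteq> {0..<n}" unfolding Hc_def by auto
  define R where "R = {0..<n} - g ` VF"
  have cR: "card R = n - card VF" unfolding R_def
    using g by (simp add: card_Diff_subset card_image finVF)
  obtain k where k: "bij_betw k R {0..<n - card VF}"
    using finite_same_card_bij[of R "{0..<n - card VF}"] cR R_def by auto
  define gi where "gi = inv_into VF g"
  define h where "h u = (if u \<in> g ` VF then Inl (gi u) else Inr (k u))" for u
  have b1: "bij_betw gi (g ` VF) VF" unfolding gi_def
    by (rule bij_betw_inv_into[OF inj_on_imp_bij_betw[OF g(2)]])
  have b1': "bij_betw (Inl \<circ> gi) (g ` VF) (Inl ` VF)"
    by (rule bij_betw_trans[OF b1]) (simp add: inj_on_imp_bij_betw)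
  have b1'': "bij_betw h (g ` VF) (Inl ` VF :: ('b + nat) set)"
    using b1' by (rule bij_betw_cong[THEN iffD1, rotated]) (simp add: h_def)
  have b2': "bij_betw (Inr \<circ> k) R (Inr ` {0..<n - card VF})"
    by (rule bij_betw_trans[OF k]) (simp add: inj_on_imp_bij_betw)
  have b2'': "bij_betw h R (Inr ` {0..<n - card VF} :: ('b + nat) set)"
    using b2' by (rule bij_betw_cong[THEN iffD1, rotated]) (simp add: h_def R_def)
  have un: "g ` VF \<union> R = {0..<n}" using g unfolding R_def by auto
  have bh: "bij_betw h {0..<n} (Inl ` VF \<union> Inr ` {0..<n - card VF})"
    using bij_betw_combine[OF b1'' b2''] un by auto
  have hg: "\<And>a. a \<in> VF \<Longrightarrow> h (g a) = Inl a" using g(2) by (simp add: h_def gi_def)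
  have hInl: "\<And>u c. h u = Inl c \<Longrightarrow> c \<in> VF \<and> u = g c"
  proof -
    fix u c assume "h u = Inl c"
    hence "u \<in> g ` VF" "c = gi u" by (auto simp: h_def split: if_splits)
    thus "c \<in> VF \<and> u = g c" by (auto simp: gi_def inv_into_into f_inv_into_f)
  qed
  have iso: "\<forall>u\<in>{0..<n}. \<forall>w\<in>{0..<n}. {u,w} \<in> D \<longleftrightarrow> {h u, h w} \<in> (`) Inl ` EF"
  proof (intro ballI iffI)
    fix u w assume "{u,w} \<in> D"
    then obtain e where e: "e \<in> EF" "{u,w} = g ` e" using g unfolding emb_def by auto
    then obtain a b where ab: "e = {a,b}" "a \<in> VF" "b \<in> VF" "a \<noteq> b" using EF_pair by blast
    have "{u,w} = {g a, g b}" using e ab by simp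
    hence "{h u, h w} = {Inl a, Inl b}" using hg ab by (auto simp: doubleton_eq_iff)
    also have "\<dots> = Inl ` e" using ab by simp
    finally show "{h u, h w} \<in> (`) Inl ` EF" using e by blast
  next
    fix u w assume "{h u, h w} \<in> (`) Inl ` EF"
    then obtain e where e: "e \<in> EF" "{h u, h w} = Inl ` e" by auto
    then obtain a b where ab: "e = {a,b}" "a \<in> VF" "b \<in> VF" "a \<noteq> b" using EF_pair by blast
    have "{h u, h w} = {Inl a, Inl b}" using e ab by simp
    hence "(h u = Inl a \<and> h w = Inl b) \<or> (h u = Inl b \<and> h w = Inl a)" by (auto simp: doubleton_eq_iff)
    hence "{u,w} = {g a, g b}" using hInl by auto
    also have "\<dots> = g ` e" using ab by simp
    finally show "{u,w} \<in> D" using e g unfolding emb_def by blast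
  qed
  have "D \<subseteq> vpairs {0..<n}" using Hc_vpairs \<open>D \<in> Hc n\<close> by blast
  thus "D \<in> hidden n VF EF" unfolding hidden_def graph_iso_def using bh iso by blast
qed

lemma hidden_Hc: "hidden n VF EF \<subseteq> Hc n"
proof
  fix E assume "E \<in> hidden n VF EF"
  then obtain h where E: "E \<subseteq> vpairs {0..<n}" and bh: "bij_betw h {0..<n} (Inl ` VF \<union> Inr ` {0..<n - card VF})"
    and iso: "\<forall>u\<in>{0..<n}. \<forall>w\<in>{0..<n}. {u,w} \<in> E \<longleftrightarrow> {h u, h w} \<in> (`) Inl ` EF"
    unfolding hidden_def graph_iso_def by blast
  define g where "g a = inv_into {0..<n} h (Inl a)" for a
  have hg: "\<And>a. a \<in> VF \<Longrightarrow> h (g a) = Inl a" unfolding g_def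
    using bh by (simp add: bij_betw_def f_inv_into_f)
  have gn: "g a \<in> {0..<n}" if a: "a \<in> VF" for a
  proof -
    have "Inl a \<in> h ` {0..<n}" using bh a by (auto simp: bij_betw_def)
    thus ?thesis unfolding g_def by (rule inv_into_into)
  qed
  have inj: "inj_on g VF"
  proof (rule inj_onI)
    fix a b assume "a \<in> VF" "b \<in> VF" "g a = g b"
    hence "Inl a = (Inl b :: 'b + nat)" using hg by metis
    thus "a = b" by simp
  qed
  have injh: "inj_on h {0..<n}" using bh by (simp add: bij_betw_def)
  have gh: "g a = u" if "u \<in> {0..<n}" "h u = Inl a" for u a
    unfolding g_def using inv_into_f_f[OF injh that(1)] that(2) by simp
  have "E = emb g"
  proof
    show "emb g \<subseteq> E"
    proof
      fix x assume "x \<in> emb g"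
      then obtain e where e: "e\<in>EF" "x = g`e" unfolding emb_def by auto
      then obtain a b where ab: "e = {a,b}" "a \<in> VF" "b \<in> VF" "a \<noteq> b" using EF_pair by blast
      have "{h (g a), h (g b)} = Inl ` e" using hg ab by simp
      moreover have "Inl ` e \<in> (`) Inl ` EF" using e(1) by (rule imageI)
      ultimately have "{h (g a), h (g b)} \<in> (`) Inl ` EF" by simp
      moreover have "g a \<in> {0..<n}" "g b \<in> {0..<n}" using gn ab by auto
      ultimately have "{g a, g b} \<in> E" using iso by blast
      thus "x \<in> E" using e ab by simp
    qed
    show "E \<subseteq> emb g"
    proof
      fix x assume "x \<in> E"
      hence "x \<in> vpairs {0..<n}" using E by blast
      then obtain u w where uw: "x = {u,w}" "u \<in> {0..<n}" "w \<in> {0..<n}" unfolding vpairs_iff by blast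
      hence "{h u, h w} \<in> (`) Inl ` EF" using iso \<open>x \<in> E\<close> by auto
      then obtain e where e: "e \<in> EF" "{h u, h w} = Inl ` e" by auto
      then obtain a b where ab: "e = {a,b}" "a \<in> VF" "b \<in> VF" "a \<noteq> b" using EF_pair by blast
      have "{h u, h w} = {Inl a, Inl b}" using e ab by simp
      hence "(h u = Inl a \<and> h w = Inl b) \<or> (h u = Inl b \<and> h w = Inl a)" by (auto simp: doubleton_eq_iff)
      hence "x = {g a, g b}" using gh uw by auto
      also have "\<dots> = g ` e" using ab by simp
      finally show "x \<in> emb g" using e unfolding emb_def by blast
    qed
  qed
  thus "E \<in> Hc n" unfolding Hc_def using inj gn by blast
qed

lemma hidden_eq: "card VF \<le> n \<Longrightarrow> hidden n VF EF = Hc n"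
  using Hc_hidden hidden_Hc by blast

end

definition inc :: "nat set \<Rightarrow> nat set set" where "inc K = {e. e \<inter> K \<noteq> {}}"

lemma inc_insert: assumes "E \<subseteq> vpairs {0..<n}" "x < n"
  shows "E \<inter> inc (insert x K) = (E \<inter> inc K) \<union> (E \<inter> set (map (\<lambda>y. {x,y}) (filter (\<lambda>y. y \<noteq> x) [0..<n])))"
proof -
  have "E \<inter> {e. x \<in> e} = E \<inter> set (map (\<lambda>y. {x,y}) (filter (\<lambda>y. y \<noteq> x) [0..<n]))"
  proof
    show "E \<inter> {e. x \<in> e} \<subseteq> E \<inter> set (map (\<lambda>y. {x,y}) (filter (\<lambda>y. y \<noteq> x) [0..<n]))"
    proof
      fix e assume e: "e \<in> E \<inter> {e. x \<in> e}"
      hence "e \<in> vpairs {0..<n}" using assms by blast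
      then obtain u w where uw: "e = {u,w}" "u < n" "w < n" "u \<noteq> w" unfolding vpairs_iff by auto
      have "x = u \<or> x = w" using e uw by auto
      hence "\<exists>y. e = {x,y} \<and> y < n \<and> y \<noteq> x" using uw by (metis insert_commute)
      thus "e \<in> E \<inter> set (map (\<lambda>y. {x,y}) (filter (\<lambda>y. y \<noteq> x) [0..<n]))" using e by auto
    qed
    show "E \<inter> set (map (\<lambda>y. {x,y}) (filter (\<lambda>y. y \<noteq> x) [0..<n])) \<subseteq> E \<inter> {e. x \<in> e}" by auto
  qed
  moreover have "inc (insert x K) = inc K \<union> {e. x \<in> e}" unfolding inc_def by auto
  ultimately show ?thesis by blast
qed

lemma explore:
  "finite K \<Longrightarrow> K \<subseteq> {0..<n} \<Longrightarrow>
   (\<forall>E\<in>C. E \<subseteq> vpairs {0..<n} \<and> card (\<Union>E) \<le> v \<and> a \<in> \<Union>E \<and>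
        (\<forall>x\<in>\<Union>E. \<forall>y\<in>\<Union>E. (x,y) \<in> {(x,y). {x,y} \<in> E}\<^sup>*)) \<Longrightarrow>
   (\<forall>E\<in>C. K \<subseteq> \<Union>E) \<Longrightarrow> (\<forall>E\<in>C. \<forall>E'\<in>C. E \<inter> inc K = E' \<inter> inc K) \<Longrightarrow>
   good n ((v - card K) * n) C"
proof (induction "v - card K" arbitrary: K C rule: less_induct)
  case less
  note fK = less.prems(1) and Kn = less.prems(2) and hyp = less.prems(3)
    and KE = less.prems(4) and agree = less.prems(5)
  show ?case
  proof (cases "C = {}")
    case True thus ?thesis by (intro good_triv) auto
  next
    case False
    then obtain E1 where E1: "E1 \<in> C" by auto
    define D0 where "D0 = E1 \<inter> inc K"
    have D0E: "\<And>E. E \<in> C \<Longrightarrow> E \<inter> inc K = D0" using agree E1 unfolding D0_def by blast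
    show ?thesis
    proof (cases "\<Union>D0 \<subseteq> K \<and> a \<in> K")
      case True
      have "E = D0" if E: "E \<in> C" for E
      proof -
        have hE: "E \<subseteq> vpairs {0..<n}" "a \<in> \<Union>E" "\<forall>x\<in>\<Union>E. \<forall>y\<in>\<Union>E. (x,y) \<in> {(x,y). {x,y} \<in> E}\<^sup>*"
          using hyp E by auto
        have UK: "\<Union>E \<subseteq> K"
        proof
          fix z assume z: "z \<in> \<Union>E"
          have "(a, z) \<in> {(x,y). {x,y} \<in> E}\<^sup>*" using hE(2,3) z by blast
          thus "z \<in> K"
          proof (induction rule: rtrancl_induct)
            case base thus ?case using True by simp
          next
            case (step y z)
            hence "{y,z} \<in> E" by simp
            moreover have "{y,z} \<in> inc K" using step.IH unfolding inc_def by auto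
            ultimately have "{y,z} \<in> D0" using D0E[OF E] by blast
            thus ?case using True by blast
          qed
        qed
        have "E \<subseteq> inc K"
        proof
          fix e assume e: "e \<in> E"
          hence "e \<in> vpairs {0..<n}" using hE(1) by blast
          then obtain u w where uw: "e = {u,w}" unfolding vpairs_iff by auto
          hence "u \<in> K" using e UK by blast
          thus "e \<in> inc K" unfolding inc_def using uw by auto
        qed
        thus "E = D0" using D0E[OF E] by blast
      qed
      thus ?thesis by (intro good_triv) auto
    next
      case False
      then obtain x where x: "x \<in> \<Union>D0 \<union> {a}" "x \<notin> K" by blast
      have xE: "x \<in> \<Union>E" if "E \<in> C" for E
      proof -
        have "D0 \<subseteq> E" using D0E[OF that] by blast
        thus ?thesis using x hyp that by blast
      qed
      have E1P: "E1 \<subseteq> vpairs {0..<n}" using hyp E1 by blast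
      have "\<Union>E1 \<subseteq> {0..<n}" using E1P vpairs_sub by blast
      hence xn: "x < n" using xE[OF E1] by auto
      define K' where "K' = insert x K"
      have cK': "card K' = Suc (card K)" unfolding K'_def using fK x by simp
      have fU: "finite (\<Union>E1)" using \<open>\<Union>E1 \<subseteq> {0..<n}\<close> finite_subset by blast
      have "K' \<subseteq> \<Union>E1" unfolding K'_def using KE E1 xE[OF E1] by blast
      hence "card K' \<le> card (\<Union>E1)" using fU card_mono by blast
      also have "\<dots> \<le> v" using hyp E1 by blast
      finally have cK'v: "card K' \<le> v" .
      hence lt: "v - card K' < v - card K" using cK' by simp
      have veq: "v - card K = Suc (v - card K')" using cK' cK'v by simp
      define qs where "qs = map (\<lambda>y. {x,y}) (filter (\<lambda>y. y \<noteq> x) [0..<n])"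
      have lq: "length qs \<le> n" unfolding qs_def by (simp add: order_trans[OF length_filter_le])
      have sq: "set qs \<subseteq> vpairs {0..<n}" unfolding qs_def vpairs_def using xn by auto
      have "\<forall>Y. good n ((v - card K') * n) {E\<in>C. E \<inter> set qs = Y}"
      proof
        fix Y
        show "good n ((v - card K') * n) {E\<in>C. E \<inter> set qs = Y}"
        proof (rule less.hyps[OF lt])
          show "finite K'" using fK unfolding K'_def by simp
          show "K' \<subseteq> {0..<n}" using Kn xn unfolding K'_def by simp
          show "\<forall>E\<in>{E\<in>C. E \<inter> set qs = Y}. E \<subseteq> vpairs {0..<n} \<and> card (\<Union>E) \<le> v \<and> a \<in> \<Union>E \<and>
            (\<forall>x\<in>\<Union>E. \<forall>y\<in>\<Union>E. (x,y) \<in> {(x,y). {x,y} \<in> E}\<^sup>*)" using hyp by blast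
          show "\<forall>E\<in>{E\<in>C. E \<inter> set qs = Y}. K' \<subseteq> \<Union>E" using KE xE unfolding K'_def by blast
          show "\<forall>E\<in>{E\<in>C. E \<inter> set qs = Y}. \<forall>E'\<in>{E\<in>C. E \<inter> set qs = Y}. E \<inter> inc K' = E' \<inter> inc K'"
          proof (intro ballI)
            fix E E' assume E: "E \<in> {E\<in>C. E \<inter> set qs = Y}" and E': "E' \<in> {E\<in>C. E \<inter> set qs = Y}"
            have "E \<inter> inc K' = D0 \<union> Y" unfolding K'_def
              using inc_insert[of E n x K] E hyp xn D0E unfolding qs_def by auto
            moreover have "E' \<inter> inc K' = D0 \<union> Y" unfolding K'_def
              using inc_insert[of E' n x K] E' hyp xn D0E unfolding qs_def by auto
            ultimately show "E \<inter> inc K' = E' \<inter> inc K'" by simp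
          qed
        qed
      qed
      hence "good n (length qs + (v - card K') * n) C" by (rule good_list[OF sq])
      moreover have "length qs + (v - card K') * n \<le> (v - card K) * n" using veq lq by simp
      ultimately show ?thesis using good_mono by blast
    qed
  qed
qed


lemma vpairsE: "x \<in> vpairs V \<Longrightarrow> (\<And>u v. x = {u,v} \<Longrightarrow> u \<in> V \<Longrightarrow> v \<in> V \<Longrightarrow> u \<noteq> v \<Longrightarrow> P) \<Longrightarrow> P"
  unfolding vpairs_def by blast

lemma Max_card_props:
  fixes P :: "'a set"
  assumes fP: "finite P" and E0: "E0 \<subseteq> P" "Q E0"
  shows "(\<exists>G. G \<subseteq> P \<and> Q G \<and> card G = Max {card E | E. E \<subseteq> P \<and> Q E})
    \<and> (\<forall>G. G \<subseteq> P \<and> Q G \<longrightarrow> card G \<le> Max {card E | E. E \<subseteq> P \<and> Q E})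
    \<and> Max {card E | E. E \<subseteq> P \<and> Q E} \<le> card P"
proof -
  let ?S = "{card E | E. E \<subseteq> P \<and> Q E}"
  have sub: "?S \<subseteq> card ` Pow P"
  proof
    fix x assume "x \<in> ?S"
    then obtain E where "x = card E" "E \<subseteq> P" by blast
    thus "x \<in> card ` Pow P" by blast
  qed
  have fS: "finite ?S" using finite_subset[OF sub] fP by simp
  have "card E0 \<in> ?S" using E0 by blast
  hence ne: "?S \<noteq> {}" by blast
  have 1: "Max ?S \<in> ?S" using fS ne by (rule Max_in)
  have 2: "\<forall>G. G \<subseteq> P \<and> Q G \<longrightarrow> card G \<le> Max ?S"
  proof (intro allI impI)
    fix G assume "G \<subseteq> P \<and> Q G"
    hence "card G \<in> ?S" by blast
    thus "card G \<le> Max ?S" using fS by (rule Max_ge[rotated])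
  qed
  have "s \<le> card P" if sS: "s \<in> ?S" for s
  proof -
    obtain E where "s = card E" "E \<subseteq> P" using sS by blast
    thus ?thesis using fP card_mono by simp
  qed
  hence 3: "Max ?S \<le> card P" using 1 by blast
  obtain G where G: "Max ?S = card G" "G \<subseteq> P" "Q G" using 1 by blast
  have "\<exists>G. G \<subseteq> P \<and> Q G \<and> card G = Max ?S" using G by metis
  thus ?thesis using 2 3 by simp
qed

context FG begin

lemma cnt_self: "D \<in> Hc n \<Longrightarrow> {D' \<in> Hc n. D' \<subseteq> D} = {D}"
proof -
  assume D: "D \<in> Hc n"
  have fD: "finite D" using Hc_vpairs[OF D] finite_vpairs finite_subset by blast
  have "D' = D" if "D' \<in> Hc n" "D' \<subseteq> D" for D'
    using card_subset_eq[OF fD that(2)] Hc_card that(1) D by simp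
  thus ?thesis using D by blast
qed

lemma exists_emb: assumes "card VF \<le> n"
  shows "\<exists>g. bij_betw g VF {n - card VF..<n}"
proof -
  show ?thesis by (rule finite_same_card_bij[OF finVF]) (use assms in simp_all)
qed

lemma Hc_ne_set: assumes "card VF \<le> n" shows "\<exists>D0. D0 \<in> Hc n \<and> \<Union>D0 \<subseteq> {n - card VF..<n}"
proof -
  obtain g where g: "bij_betw g VF {n - card VF..<n}" using exists_emb assms by blast
  hence "inj_on g VF" "g ` VF \<subseteq> {0..<n}" by (auto simp: bij_betw_def)
  hence "emb g \<in> Hc n" unfolding Hc_def by blast
  moreover have "\<Union>(emb g) \<subseteq> {n - card VF..<n}" using g emb_union by (auto simp: bij_betw_def)
  ultimately show ?thesis by blast
qed

lemma copies_finite: "finite (copies n E VF EF)"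
  unfolding copies_eq using Hc_finite by simp

lemma exa1_eq: "exa1 n VF EF = Max {card E | E. E \<subseteq> vpairs {0..<n} \<and> cnt n E = 1}"
  unfolding exa1_def card_copies ..

lemma ex_eq: "ex_num n VF EF = Max {card E | E. E \<subseteq> vpairs {0..<n} \<and> cnt n E = 0}"
proof -
  have "copies n E VF EF = {} \<longleftrightarrow> cnt n E = 0" for E
    using card_copies[of n E] copies_finite[of n E] by auto
  thus ?thesis unfolding ex_num_def by simp
qed

lemma exa1_props: assumes "card VF \<le> n"
  shows "(\<exists>G. G \<subseteq> vpairs {0..<n} \<and> cnt n G = 1 \<and> card G = exa1 n VF EF)
    \<and> (\<forall>G. G \<subseteq> vpairs {0..<n} \<and> cnt n G = 1 \<longrightarrow> card G \<le> exa1 n VF EF)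
    \<and> exa1 n VF EF \<le> n choose 2"
proof -
  obtain D0 where D0: "D0 \<in> Hc n" using Hc_ne_set assms by blast
  have "cnt n D0 = 1" unfolding cnt_def using cnt_self[OF D0] by simp
  moreover have "D0 \<subseteq> vpairs {0..<n}" using Hc_vpairs D0 by blast
  ultimately have M: "(\<exists>G. G \<subseteq> vpairs {0..<n} \<and> cnt n G = 1 \<and> card G = Max {card E | E. E \<subseteq> vpairs {0..<n} \<and> cnt n E = 1})
    \<and> (\<forall>G. G \<subseteq> vpairs {0..<n} \<and> cnt n G = 1 \<longrightarrow> card G \<le> Max {card E | E. E \<subseteq> vpairs {0..<n} \<and> cnt n E = 1})
    \<and> Max {card E | E. E \<subseteq> vpairs {0..<n} \<and> cnt n E = 1} \<le> card (vpairs {0..<n})"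
    by (intro Max_card_props[where Q = "\<lambda>E. cnt n E = 1"] finite_vpairs) auto
  have "card (vpairs {0..<n}) = n choose 2" using card_vpairs[of "{0..<n}"] by simp
  thus ?thesis unfolding exa1_eq using M by presburger
qed

lemma ex_props:
  shows "(\<exists>G. G \<subseteq> vpairs {0..<n} \<and> cnt n G = 0 \<and> card G = ex_num n VF EF)
    \<and> (\<forall>G. G \<subseteq> vpairs {0..<n} \<and> cnt n G = 0 \<longrightarrow> card G \<le> ex_num n VF EF)"
proof -
  have "cnt n {} = 0" unfolding cnt_def using Hc_ne by auto
  hence M: "(\<exists>G. G \<subseteq> vpairs {0..<n} \<and> cnt n G = 0 \<and> card G = Max {card E | E. E \<subseteq> vpairs {0..<n} \<and> cnt n E = 0})
    \<and> (\<forall>G. G \<subseteq> vpairs {0..<n} \<and> cnt n G = 0 \<longrightarrow> card G \<le> Max {card E | E. E \<subseteq> vpairs {0..<n} \<and> cnt n E = 0})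
    \<and> Max {card E | E. E \<subseteq> vpairs {0..<n} \<and> cnt n E = 0} \<le> card (vpairs {0..<n})"
    by (intro Max_card_props[where Q = "\<lambda>E. cnt n E = 0"] finite_vpairs) auto
  thus ?thesis unfolding ex_eq by blast
qed

lemma Lgame_eq: "Lgame n VF EF = (LEAST k. good n k (hidden n VF EF))"
  unfolding Lgame_def good_def ..

lemma upper_good: assumes v: "card VF \<le> n"
  shows "good n ((n choose 2) - exa1 n VF EF + card VF * n) (hidden n VF EF)"
proof -
  obtain G where G: "G \<subseteq> vpairs {0..<n}" "cnt n G = 1" "card G = exa1 n VF EF"
    using exa1_props[OF v] by blast
  have "card {D \<in> Hc n. D \<subseteq> G} = 1" using G(2) unfolding cnt_def .
  then obtain D1 where D1: "{D \<in> Hc n. D \<subseteq> G} = {D1}" by (rule card_1_singletonE)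
  define A where "A = vpairs {0..<n} - G"
  have fP: "finite (vpairs {0..<n})" by (rule finite_vpairs) simp
  have cP: "card (vpairs {0..<n}) = n choose 2" using card_vpairs[of "{0..<n}"] by simp
  have fA: "finite A" unfolding A_def using fP by simp
  obtain qs where qs: "set qs = A" "distinct qs" using finite_distinct_list[OF fA] by blast
  have cA: "card A = card (vpairs {0..<n}) - card G"
    unfolding A_def using card_Diff_subset[OF finite_subset[OF G(1) fP] G(1)] .
  have lq: "length qs = (n choose 2) - exa1 n VF EF"
    using distinct_card[OF qs(2)] qs(1) cA cP G(3) by simp
  have sq: "set qs \<subseteq> vpairs {0..<n}" using qs unfolding A_def by blast
  have hH: "hidden n VF EF = Hc n" using hidden_eq v by simp
  have inG: "X \<in> {D \<in> Hc n. D \<subseteq> G}" if X: "X \<in> {E \<in> hidden n VF EF. E \<inter> set qs = {}}" for X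
  proof -
    have XH: "X \<in> Hc n" using X hH by simp
    have "X \<subseteq> G"
    proof
      fix x assume "x \<in> X"
      hence "x \<in> vpairs {0..<n}" using Hc_vpairs XH by blast
      moreover have "X \<inter> set qs = {}" using X by simp
      hence "x \<notin> A" using qs(1) \<open>x \<in> X\<close> by auto
      ultimately show "x \<in> G" unfolding A_def by simp
    qed
    thus ?thesis using XH by simp
  qed
  have g0: "good n (card VF * n) {E \<in> hidden n VF EF. E \<inter> set qs = {}}"
  proof (rule good_triv, intro ballI)
    fix X Y assume X: "X \<in> {E \<in> hidden n VF EF. E \<inter> set qs = {}}" and Y: "Y \<in> {E \<in> hidden n VF EF. E \<inter> set qs = {}}"
    have "X \<in> {D1}" using inG[OF X] D1 by simp
    moreover have "Y \<in> {D1}" using inG[OF Y] D1 by simp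
    ultimately show "X = Y" by simp
  qed
  have g1: "\<forall>q\<in>set qs. good n (card VF * n) {E \<in> hidden n VF EF. q \<in> E}"
  proof
    fix q assume "q \<in> set qs"
    hence "q \<in> vpairs {0..<n}" using sq by blast
    then obtain a b where ab: "q = {a,b}" by (rule vpairsE)
    have "good n ((card VF - card ({}::nat set)) * n) {E \<in> hidden n VF EF. q \<in> E}"
    proof (rule explore[where a = a])
      show "\<forall>E\<in>{E \<in> hidden n VF EF. q \<in> E}. E \<subseteq> vpairs {0..<n} \<and> card (\<Union>E) \<le> card VF \<and> a \<in> \<Union>E \<and>
        (\<forall>x\<in>\<Union>E. \<forall>y\<in>\<Union>E. (x,y) \<in> {(x,y). {x,y} \<in> E}\<^sup>*)"
      proof
        fix E assume E: "E \<in> {E \<in> hidden n VF EF. q \<in> E}"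
        hence EH: "E \<in> Hc n" and qE: "q \<in> E" using hH by auto
        have 1: "E \<subseteq> vpairs {0..<n}" using Hc_vpairs[OF EH] .
        have 2: "card (\<Union>E) \<le> card VF" using Hc_card_union[OF EH] by simp
        have 3: "a \<in> \<Union>E" using qE ab by blast
        have 4: "\<forall>x\<in>\<Union>E. \<forall>y\<in>\<Union>E. (x,y) \<in> {(x,y). {x,y} \<in> E}\<^sup>*" using Hc_conn[OF EH] by blast
        show "E \<subseteq> vpairs {0..<n} \<and> card (\<Union>E) \<le> card VF \<and> a \<in> \<Union>E \<and>
          (\<forall>x\<in>\<Union>E. \<forall>y\<in>\<Union>E. (x,y) \<in> {(x,y). {x,y} \<in> E}\<^sup>*)" using 1 2 3 4 by blast
      qed
      show "\<forall>E\<in>{E \<in> hidden n VF EF. q \<in> E}. \<forall>E'\<in>{E \<in> hidden n VF EF. q \<in> E}. E \<inter> inc {} = E' \<inter> inc {}"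
        unfolding inc_def by simp
    qed auto
    thus "good n (card VF * n) {E \<in> hidden n VF EF. q \<in> E}" by simp
  qed
  have "good n (length qs + card VF * n) (hidden n VF EF)"
    by (rule good_phase1[OF sq g0 g1])
  thus ?thesis using lq by simp
qed

lemma lower_good: assumes v: "card VF \<le> n" and g: "good n k (hidden n VF EF)"
  shows "n choose 2 \<le> k + exa1 n VF EF"
proof -
  obtain T where T: "solves n T (hidden n VF EF)" "\<forall>E\<in>hidden n VF EF. cost T E \<le> k"
    using g unfolding good_def by blast
  have hH: "hidden n VF EF = Hc n" using hidden_eq v by simp
  obtain D0 where "D0 \<in> Hc n" using Hc_ne_set v by blast
  hence ne: "hidden n VF EF \<noteq> {}" using hH by auto
  obtain E0 N where E0: "E0 \<in> hidden n VF EF" and N: "N \<subseteq> vpairs {0..<n}" "finite N"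
    "card N \<le> cost T E0" "E0 \<inter> N = {}" and uniq: "\<forall>E\<in>hidden n VF EF. E \<inter> N = {} \<longrightarrow> E = E0"
    using adversary[OF T(1) ne] by blast
  define G where "G = vpairs {0..<n} - N"
  have "{D \<in> Hc n. D \<subseteq> G} = {E0}"
  proof
    show "{D \<in> Hc n. D \<subseteq> G} \<subseteq> {E0}" using uniq hH unfolding G_def by blast
    show "{E0} \<subseteq> {D \<in> Hc n. D \<subseteq> G}" using E0 hH N(4) Hc_vpairs unfolding G_def by blast
  qed
  hence "cnt n G = 1" unfolding cnt_def by simp
  hence "card G \<le> exa1 n VF EF" using exa1_props[OF v] unfolding G_def by blast
  moreover have "card G + card N = n choose 2"
  proof -
    have fP: "finite (vpairs {0..<n})" by (rule finite_vpairs) simp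
    have cP: "card (vpairs {0..<n}) = n choose 2" using card_vpairs[of "{0..<n}"] by simp
    have "card G = card (vpairs {0..<n}) - card N" unfolding G_def using card_Diff_subset[OF N(2) N(1)] .
    moreover have "card N \<le> card (vpairs {0..<n})" using card_mono[OF fP N(1)] .
    ultimately show ?thesis using cP by simp
  qed
  moreover have "card N \<le> k" using N(3) T(2) E0 by (meson order_trans)
  ultimately show ?thesis by linarith
qed

lemma game_bounds: assumes v: "card VF \<le> n"
  shows "n choose 2 \<le> Lgame n VF EF + exa1 n VF EF"
    and "Lgame n VF EF + exa1 n VF EF \<le> (n choose 2) + card VF * n"
proof -
  have ex: "\<exists>k. good n k (hidden n VF EF)" using upper_good[OF v] by blast
  have gL: "good n (Lgame n VF EF) (hidden n VF EF)" unfolding Lgame_eq using LeastI_ex[OF ex] .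
  show "n choose 2 \<le> Lgame n VF EF + exa1 n VF EF" by (rule lower_good[OF v gL])
  have "Lgame n VF EF \<le> (n choose 2) - exa1 n VF EF + card VF * n"
    unfolding Lgame_eq by (rule Least_le[where P = "\<lambda>k. good n k (hidden n VF EF)", OF upper_good[OF v]])
  moreover have "exa1 n VF EF \<le> n choose 2" using exa1_props[OF v] by blast
  ultimately show "Lgame n VF EF + exa1 n VF EF \<le> (n choose 2) + card VF * n" by simp
qed

end

context FG begin

lemma cnt0_empty: "cnt n H = 0 \<Longrightarrow> {D \<in> Hc n. D \<subseteq> H} = {}"
  unfolding cnt_def using Hc_finite by simp

lemma exa1_le_ex: assumes v: "card VF \<le> n" shows "exa1 n VF EF \<le> ex_num n VF EF + 1"
proof -
  obtain G where G: "G \<subseteq> vpairs {0..<n}" "cnt n G = 1" "card G = exa1 n VF EF"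
    using exa1_props[OF v] by blast
  have "card {D \<in> Hc n. D \<subseteq> G} = 1" using G(2) unfolding cnt_def .
  then obtain D1 where D1: "{D \<in> Hc n. D \<subseteq> G} = {D1}" by (rule card_1_singletonE)
  have D1H: "D1 \<in> Hc n" "D1 \<subseteq> G" using D1 by auto
  obtain d where d: "d \<in> D1" using Hc_ne[OF D1H(1)] by blast
  define G' where "G' = G - {d}"
  have "{D \<in> Hc n. D \<subseteq> G'} = {}"
  proof (rule ccontr)
    assume "{D \<in> Hc n. D \<subseteq> G'} \<noteq> {}"
    then obtain D where D: "D \<in> Hc n" "D \<subseteq> G'" by blast
    hence "D \<in> {D \<in> Hc n. D \<subseteq> G}" unfolding G'_def by blast
    hence "D = D1" using D1 by simp
    thus False using D d unfolding G'_def by blast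
  qed
  hence "cnt n G' = 0" unfolding cnt_def by (simp only: card.empty)
  moreover have "G' \<subseteq> vpairs {0..<n}" using G unfolding G'_def by blast
  ultimately have c1: "card G' \<le> ex_num n VF EF" using ex_props by blast
  have "finite G" using G(1) finite_subset finite_vpairs[of "{0..<n}"] by simp
  moreover have "d \<in> G" using d D1H by blast
  ultimately have "card G' = card G - 1" unfolding G'_def by (simp add: card_Diff_singleton)
  thus ?thesis using G(3) c1 by simp
qed

lemma card_incB: assumes "finite B"
  shows "card (vpairs {0..<n} \<inter> inc B) \<le> card B * n"
proof -
  have sub: "vpairs {0..<n} \<inter> inc B \<subseteq> (\<Union>b\<in>B. (\<lambda>y. {b,y}) ` {0..<n})"
  proof
    fix e assume e: "e \<in> vpairs {0..<n} \<inter> inc B"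
    hence "e \<in> vpairs {0..<n}" by simp
    then obtain u w where uw: "e = {u,w}" "u \<in> {0..<n}" "w \<in> {0..<n}" by (rule vpairsE)
    have "e \<inter> B \<noteq> {}" using e unfolding inc_def by simp
    hence "u \<in> B \<or> w \<in> B" using uw by auto
    thus "e \<in> (\<Union>b\<in>B. (\<lambda>y. {b,y}) ` {0..<n})"
    proof
      assume "u \<in> B"
      moreover have "e = (\<lambda>y. {u,y}) w" using uw by simp
      ultimately show ?thesis using uw by blast
    next
      assume "w \<in> B"
      moreover have "e = (\<lambda>y. {w,y}) u" using uw by (simp add: insert_commute)
      ultimately show ?thesis using uw by blast
    qed
  qed
  have "card (vpairs {0..<n} \<inter> inc B) \<le> card (\<Union>b\<in>B. (\<lambda>y. {b,y}) ` {0..<n})"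
    by (rule card_mono[OF _ sub]) (use assms in simp)
  also have "\<dots> \<le> (\<Sum>b\<in>B. card ((\<lambda>y. {b,y}) ` {0..<n}))" by (rule card_UN_le[OF assms])
  also have "\<dots> \<le> (\<Sum>b\<in>B. n)" by (rule sum_mono) (metis card_atLeastLessThan card_image_le finite_atLeastLessThan minus_nat.diff_0)
  also have "\<dots> = card B * n" by simp
  finally show ?thesis .
qed

lemma ex_le_exa1: assumes v: "card VF \<le> n" shows "ex_num n VF EF \<le> exa1 n VF EF + card VF * n"
proof -
  obtain H where H: "H \<subseteq> vpairs {0..<n}" "cnt n H = 0" "card H = ex_num n VF EF"
    using ex_props by blast
  have H0: "{D \<in> Hc n. D \<subseteq> H} = {}" using cnt0_empty[OF H(2)] .
  define B where "B = {n - card VF..<n}"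
  obtain D0 where D0: "D0 \<in> Hc n" "\<Union>D0 \<subseteq> B" using Hc_ne_set[OF v] unfolding B_def by blast
  have D0inc: "D0 \<subseteq> inc B"
  proof
    fix e assume e: "e \<in> D0"
    hence "e \<in> vpairs {0..<n}" using Hc_vpairs[OF D0(1)] by blast
    then obtain u w where uw: "e = {u,w}" by (rule vpairsE)
    hence "u \<in> B" using e D0(2) by blast
    thus "e \<in> inc B" unfolding inc_def using uw by auto
  qed
  define G where "G = (H - inc B) \<union> D0"
  have GP: "G \<subseteq> vpairs {0..<n}" unfolding G_def using H(1) Hc_vpairs[OF D0(1)] by blast
  have "{D \<in> Hc n. D \<subseteq> G} = {D0}"
  proof
    show "{D0} \<subseteq> {D \<in> Hc n. D \<subseteq> G}" using D0 unfolding G_def by blast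
    show "{D \<in> Hc n. D \<subseteq> G} \<subseteq> {D0}"
    proof
      fix D assume "D \<in> {D \<in> Hc n. D \<subseteq> G}"
      hence D: "D \<in> Hc n" "D \<subseteq> G" by auto
      have DP: "D \<subseteq> vpairs {0..<n}" using Hc_vpairs[OF D(1)] .
      show "D \<in> {D0}"
      proof (cases "D \<inter> inc B = {}")
        case True
        have "D \<subseteq> H"
        proof
          fix e assume "e \<in> D"
          hence "e \<in> G" "e \<notin> inc B" using D True by auto
          thus "e \<in> H" using D0inc unfolding G_def by blast
        qed
        hence "D \<in> {D \<in> Hc n. D \<subseteq> H}" using D by simp
        thus ?thesis using H0 by simp
      next
        case False
        then obtain e where e: "e \<in> D" "e \<inter> B \<noteq> {}" unfolding inc_def by blast
        then obtain p where p: "p \<in> e" "p \<in> B" by blast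
        have pD: "p \<in> \<Union>D" using e p by blast
        have UB: "\<Union>D \<subseteq> B"
        proof
          fix z assume z: "z \<in> \<Union>D"
          have "(p, z) \<in> {(x, y). {x, y} \<in> D}\<^sup>*" using Hc_conn[OF D(1) pD z] .
          thus "z \<in> B"
          proof (induction rule: rtrancl_induct)
            case base thus ?case using p by simp
          next
            case (step y z)
            hence yz: "{y,z} \<in> D" by simp
            have "{y,z} \<in> inc B" using step.IH unfolding inc_def by auto
            hence "{y,z} \<in> D0" using yz D unfolding G_def by blast
            thus ?case using D0(2) by blast
          qed
        qed
        have "D \<subseteq> D0"
        proof
          fix x assume x: "x \<in> D"
          hence "x \<in> vpairs {0..<n}" using DP by blast
          then obtain u w where uw: "x = {u,w}" by (rule vpairsE)
          hence "u \<in> B" using x UB by blast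
          hence "x \<in> inc B" unfolding inc_def using uw by auto
          thus "x \<in> D0" using x D unfolding G_def by blast
        qed
        moreover have "finite D0" using Hc_vpairs[OF D0(1)] finite_vpairs[of "{0..<n}"] finite_subset by auto
        moreover have "card D = card D0" using Hc_card D D0 by simp
        ultimately have "D = D0" using card_subset_eq by blast
        thus ?thesis by simp
      qed
    qed
  qed
  hence "cnt n G = 1" unfolding cnt_def by simp
  hence cG: "card G \<le> exa1 n VF EF" using exa1_props[OF v] GP by blast
  have fH: "finite H" using H(1) finite_vpairs[of "{0..<n}"] finite_subset by auto
  have "card H \<le> card (H - inc B) + card (H \<inter> inc B)"
    using card_Un_le[of "H - inc B" "H \<inter> inc B"] by (simp add: Un_Diff_Int)
  moreover have "card (H - inc B) \<le> card G" unfolding G_def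
    using fH Hc_vpairs[OF D0(1)] finite_vpairs[of "{0..<n}"] finite_subset
    by (intro card_mono) auto
  moreover have "card (H \<inter> inc B) \<le> card VF * n"
  proof -
    have "card (H \<inter> inc B) \<le> card (vpairs {0..<n} \<inter> inc B)"
      using H(1) finite_vpairs[of "{0..<n}"] by (intro card_mono) auto
    also have "\<dots> \<le> card B * n" by (rule card_incB) (simp add: B_def)
    also have "card B = card VF" using v unfolding B_def by simp
    finally show ?thesis .
  qed
  ultimately show ?thesis using H(3) cG by linarith
qed

end

lemma binom_ineq: "l \<le> m \<Longrightarrow> m \<le> M \<Longrightarrow> ((M - l) choose (m - l)) * M ^ l \<le> (M choose m) * m ^ l"
proof (induction l)
  case 0 thus ?case by simp
next
  case (Suc l)
  have IH: "((M - l) choose (m - l)) * M ^ l \<le> (M choose m) * m ^ l" using Suc by simp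
  define a where "a = M - l"
  define b where "b = m - l"
  have b0: "0 < b" using Suc.prems unfolding b_def by simp
  have ab: "b \<le> a" using Suc.prems unfolding a_def b_def by simp
  have a0: "0 < a" using b0 ab by simp
  have eq1: "M - Suc l = a - 1" "m - Suc l = b - 1" unfolding a_def b_def by simp_all
  have id: "b * (a choose b) = a * ((a - 1) choose (b - 1))"
    using times_binomial_minus1_eq[OF b0] .
  have bMam: "b * M \<le> a * m"
  proof -
    have lm: "l * m \<le> l * M" using Suc.prems by simp
    have e1: "(m - l) * M = m * M - l * M" by (simp add: diff_mult_distrib)
    have e2: "(M - l) * m = m * M - l * m" by (simp add: diff_mult_distrib mult.commute[of M m])
    have "m * M - l * M \<le> m * M - l * m" using lm by (rule diff_le_mono2)
    thus ?thesis unfolding a_def b_def e1 e2 .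
  qed
  have key: "((a - 1) choose (b - 1)) * M \<le> (a choose b) * m"
  proof -
    have "a * (((a - 1) choose (b - 1)) * M) = (b * (a choose b)) * M" using id by simp
    also have "\<dots> = (a choose b) * (b * M)" by simp
    also have "\<dots> \<le> (a choose b) * (a * m)" using bMam by simp
    also have "\<dots> = a * ((a choose b) * m)" by simp
    finally show ?thesis using a0 by simp
  qed
  have "((M - Suc l) choose (m - Suc l)) * M ^ Suc l = (((a - 1) choose (b - 1)) * M) * M ^ l"
    using eq1 by simp
  also have "\<dots> \<le> ((a choose b) * m) * M ^ l" using key by simp
  also have "\<dots> = m * ((a choose b) * M ^ l)" by simp
  also have "\<dots> \<le> m * ((M choose m) * m ^ l)" using IH unfolding a_def b_def by simp
  also have "\<dots> = (M choose m) * m ^ Suc l" by simp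
  finally show ?case .
qed

lemma avg_exists: "finite A \<Longrightarrow> A \<noteq> {} \<Longrightarrow> \<exists>x\<in>A. card A * (f x :: nat) \<le> sum f A"
proof -
  assume fA: "finite A" and ne: "A \<noteq> {}"
  have "Min (f ` A) \<in> f ` A" using fA ne by simp
  then obtain x where x: "x \<in> A" "f x = Min (f ` A)" by auto
  have "\<And>y. y \<in> A \<Longrightarrow> f x \<le> f y" using x fA by simp
  hence "of_nat (card A) * f x \<le> sum f A" by (rule sum_bounded_below)
  hence "card A * f x \<le> sum f A" using x(2) by simp
  thus ?thesis using x(1) by blast
qed

lemma count_supersets:
  assumes fP: "finite P" and Z: "Z \<subseteq> P" "card Z = l" and lm: "l \<le> m"
  shows "card {G. G \<subseteq> P \<and> card G = m \<and> Z \<subseteq> G} = (card P - l) choose (m - l)"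
proof -
  have fZ: "finite Z" using fP Z finite_subset by blast
  have eq: "{G. G \<subseteq> P \<and> card G = m \<and> Z \<subseteq> G} = (\<lambda>G'. G' \<union> Z) ` {G'. G' \<subseteq> P - Z \<and> card G' = m - l}"
  proof
    show "{G. G \<subseteq> P \<and> card G = m \<and> Z \<subseteq> G} \<subseteq> (\<lambda>G'. G' \<union> Z) ` {G'. G' \<subseteq> P - Z \<and> card G' = m - l}"
    proof
      fix G assume G: "G \<in> {G. G \<subseteq> P \<and> card G = m \<and> Z \<subseteq> G}"
      hence "G = (G - Z) \<union> Z" by blast
      moreover have "card (G - Z) = m - l" using G Z card_Diff_subset[OF fZ] by auto
      moreover have "G - Z \<subseteq> P - Z" using G by blast
      ultimately show "G \<in> (\<lambda>G'. G' \<union> Z) ` {G'. G' \<subseteq> P - Z \<and> card G' = m - l}" by blast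
    qed
    show "(\<lambda>G'. G' \<union> Z) ` {G'. G' \<subseteq> P - Z \<and> card G' = m - l} \<subseteq> {G. G \<subseteq> P \<and> card G = m \<and> Z \<subseteq> G}"
    proof
      fix G assume "G \<in> (\<lambda>G'. G' \<union> Z) ` {G'. G' \<subseteq> P - Z \<and> card G' = m - l}"
      then obtain G' where G': "G = G' \<union> Z" "G' \<subseteq> P - Z" "card G' = m - l" by blast
      have fG': "finite G'" using G' fP finite_subset by blast
      have "G' \<inter> Z = {}" using G' by blast
      hence "card (G' \<union> Z) = card G' + card Z" using card_Un_disjoint fG' fZ by blast
      hence "card G = card G' + card Z" using G' by simp
      hence "card G = m" using G' Z lm by simp
      thus "G \<in> {G. G \<subseteq> P \<and> card G = m \<and> Z \<subseteq> G}" using G' Z by blast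
    qed
  qed
  have inj: "inj_on (\<lambda>G'. G' \<union> Z) {G'. G' \<subseteq> P - Z \<and> card G' = m - l}"
    by (rule inj_onI) blast
  have "card {G. G \<subseteq> P \<and> card G = m \<and> Z \<subseteq> G} = card {G'. G' \<subseteq> P - Z \<and> card G' = m - l}"
    unfolding eq by (rule card_image[OF inj])
  also have "\<dots> = card (P - Z) choose (m - l)" by (rule n_subsets) (use fP in simp)
  also have "card (P - Z) = card P - l" using card_Diff_subset[OF fZ Z(1)] Z by simp
  finally show ?thesis .
qed

lemma deletion_count:
  assumes fP: "finite P" and Zs: "\<forall>Z\<in>Zs. Z \<subseteq> P \<and> card Z = l" and fZs: "finite Zs"
    and lm: "l \<le> m" and mP: "m \<le> card P"
  shows "\<exists>G. G \<subseteq> P \<and> card G = m \<and> card {Z\<in>Zs. Z \<subseteq> G} * (card P) ^ l \<le> card Zs * m ^ l"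
proof -
  define Gm where "Gm = {G. G \<subseteq> P \<and> card G = m}"
  have fGm: "finite Gm" unfolding Gm_def using fP by simp
  have cGm: "card Gm = card P choose m" unfolding Gm_def using n_subsets[OF fP] .
  have pos: "0 < card P choose m" using mP by simp
  hence ne: "Gm \<noteq> {}" using cGm by auto
  define f where "f G = card {Z\<in>Zs. Z \<subseteq> G}" for G
  have "sum f Gm = (\<Sum>G\<in>Gm. \<Sum>Z\<in>Zs. if Z \<subseteq> G then 1 else 0)"
    unfolding f_def card_eq_sum by (intro sum.cong refl sum.inter_filter[OF fZs])
  also have "\<dots> = (\<Sum>Z\<in>Zs. \<Sum>G\<in>Gm. if Z \<subseteq> G then 1 else 0)" by (rule sum.swap)
  also have "\<dots> = (\<Sum>Z\<in>Zs. card {G\<in>Gm. Z \<subseteq> G})"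
    unfolding card_eq_sum by (intro sum.cong refl sum.inter_filter[OF fGm, symmetric])
  also have "\<dots> = (\<Sum>Z\<in>Zs. (card P - l) choose (m - l))"
  proof (intro sum.cong refl)
    fix Z assume "Z \<in> Zs"
    hence "Z \<subseteq> P" "card Z = l" using Zs by auto
    moreover have "{G\<in>Gm. Z \<subseteq> G} = {G. G \<subseteq> P \<and> card G = m \<and> Z \<subseteq> G}" unfolding Gm_def by blast
    ultimately show "card {G\<in>Gm. Z \<subseteq> G} = (card P - l) choose (m - l)"
      using count_supersets[OF fP _ _ lm] by simp
  qed
  also have "\<dots> = card Zs * ((card P - l) choose (m - l))" by simp
  finally have S: "sum f Gm = card Zs * ((card P - l) choose (m - l))" .
  obtain G where G: "G \<in> Gm" "card Gm * f G \<le> sum f Gm" using avg_exists[OF fGm ne] by blast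
  have "(card P choose m) * (f G * (card P) ^ l) = (card Gm * f G) * (card P) ^ l" using cGm by simp
  also have "\<dots> \<le> (card Zs * ((card P - l) choose (m - l))) * (card P) ^ l" using G S by simp
  also have "\<dots> = card Zs * (((card P - l) choose (m - l)) * (card P) ^ l)" by simp
  also have "\<dots> \<le> card Zs * ((card P choose m) * m ^ l)" using binom_ineq[OF lm mP] by simp
  also have "\<dots> = (card P choose m) * (card Zs * m ^ l)" by simp
  finally have "f G * (card P) ^ l \<le> card Zs * m ^ l" using pos by simp
  thus ?thesis using G unfolding Gm_def f_def by blast
qed


lemma vpairsI: "u \<in> V \<Longrightarrow> v \<in> V \<Longrightarrow> u \<noteq> v \<Longrightarrow> {u,v} \<in> vpairs V"
  unfolding vpairs_def by blast

lemma two_choose2: "2 * (n choose 2) = n * (n - 1)"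
  using times_binomial_minus1_eq[of 2 n] by simp

lemma mod_cyc: fixes L i j :: nat assumes L3: "3 \<le> L" and iL: "i < L" and jL: "j < L"
  and a4: "i = (j+1) mod L" and a5: "j = (i+1) mod L" shows False
proof (cases "j + 1 < L")
  case True
  hence "(j+1) mod L = j+1" by simp
  hence ij: "i = j + 1" using a4 by linarith
  show False
  proof (cases "i + 1 < L")
    case True
    hence "(i+1) mod L = i+1" by simp
    thus False using a5 ij by linarith
  next
    case False
    hence "i + 1 = L" using iL by simp
    hence "(i+1) mod L = 0" by simp
    hence "j = 0" using a5 by linarith
    thus False using ij \<open>i + 1 = L\<close> L3 by linarith
  qed
next
  case False
  hence jL1: "j + 1 = L" using jL by simp
  hence "(j+1) mod L = 0" by simp
  hence i0: "i = 0" using a4 by linarith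
  have "(0 + 1) mod L = (1::nat)" using L3 by simp
  hence "(i+1) mod L = 1" using i0 by simp
  hence "j = 1" using a5 by linarith
  thus False using jL1 L3 by linarith
qed

lemma mod_ne: fixes L i :: nat assumes L3: "3 \<le> L" and iL: "i < L" shows "i \<noteq> (i+1) mod L"
proof
  assume h: "i = (i+1) mod L"
  show False
  proof (cases "i + 1 < L")
    case True
    hence "(i+1) mod L = i+1" by simp
    thus False using h by linarith
  next
    case False
    hence "i + 1 = L" using iL by simp
    hence "(i+1) mod L = 0" by simp
    hence "i = 0" using h by linarith
    thus False using \<open>i + 1 = L\<close> L3 by linarith
  qed
qed

locale FGc = FG +
  fixes vs
  assumes len: "3 \<le> length vs" and dist: "distinct vs" and svs: "set vs \<subseteq> VF"
    and cedge: "\<forall>i<length vs. {vs!i, vs!((i+1) mod length vs)} \<in> EF"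
begin

definition cyc :: "(nat \<Rightarrow> nat) \<Rightarrow> nat set set" where
  "cyc c = (\<lambda>i. {c i, c ((i+1) mod length vs)}) ` {0..<length vs}"

definition Zs :: "nat \<Rightarrow> nat set set set" where
  "Zs n = cyc ` {c \<in> {0..<length vs} \<rightarrow>\<^sub>E {0..<n}. inj_on c {0..<length vs}}"

lemma cyc_props: assumes c: "c \<in> {0..<length vs} \<rightarrow>\<^sub>E {0..<n}" "inj_on c {0..<length vs}"
  shows "cyc c \<subseteq> vpairs {0..<n}" "card (cyc c) = length vs"
proof -
  let ?L = "length vs"
  have mL: "(i+1) mod ?L < ?L" for i by (rule mod_less_divisor) (use len in linarith)
  show "cyc c \<subseteq> vpairs {0..<n}"
  proof
    fix e assume "e \<in> cyc c"
    then obtain i where i: "i < ?L" "e = {c i, c ((i+1) mod ?L)}" unfolding cyc_def by auto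
    have iL: "i \<in> {0..<?L}" "(i+1) mod ?L \<in> {0..<?L}" using i(1) mL by auto
    have "c i \<noteq> c ((i+1) mod ?L)"
    proof
      assume "c i = c ((i+1) mod ?L)"
      hence "i = (i+1) mod ?L" using inj_on_eq_iff[OF c(2) iL] by blast
      thus False using mod_ne[OF len i(1)] by blast
    qed
    moreover have "c i \<in> {0..<n}" "c ((i+1) mod ?L) \<in> {0..<n}" using c(1) iL by auto
    ultimately have "{c i, c ((i+1) mod ?L)} \<in> vpairs {0..<n}" by (intro vpairsI)
    thus "e \<in> vpairs {0..<n}" using i(2) by simp
  qed
  have "inj_on (\<lambda>i. {c i, c ((i+1) mod ?L)}) {0..<?L}"
  proof (rule inj_onI)
    fix i j assume i: "i \<in> {0..<?L}" and j: "j \<in> {0..<?L}" and eq: "{c i, c ((i+1) mod ?L)} = {c j, c ((j+1) mod ?L)}"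
    have i': "(i+1) mod ?L \<in> {0..<?L}" and j': "(j+1) mod ?L \<in> {0..<?L}" using mL by auto
    from eq have "(c i = c j \<and> c ((i+1) mod ?L) = c ((j+1) mod ?L)) \<or> (c i = c ((j+1) mod ?L) \<and> c ((i+1) mod ?L) = c j)"
      by (simp only: doubleton_eq_iff)
    thus "i = j"
    proof
      assume "c i = c j \<and> c ((i+1) mod ?L) = c ((j+1) mod ?L)"
      thus "i = j" using inj_on_eq_iff[OF c(2) i j] by simp
    next
      assume h: "c i = c ((j+1) mod ?L) \<and> c ((i+1) mod ?L) = c j"
      hence h1: "i = (j+1) mod ?L" using inj_on_eq_iff[OF c(2) i j'] by blast
      have h2: "(i+1) mod ?L = j" using h inj_on_eq_iff[OF c(2) i' j] by blast
      have i1: "i < ?L" and j1: "j < ?L" using i j by auto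
      have False by (rule mod_cyc[OF len i1 j1 h1 h2[symmetric]])
      thus "i = j" ..
    qed
  qed
  thus "card (cyc c) = length vs" unfolding cyc_def by (simp add: card_image)
qed

lemma Zs_props: "Z \<in> Zs n \<Longrightarrow> Z \<subseteq> vpairs {0..<n} \<and> card Z = length vs"
  unfolding Zs_def using cyc_props by blast

lemma Zs_finite: "finite (Zs n)"
  unfolding Zs_def by (rule finite_imageI) (rule finite_subset[of _ "{0..<length vs} \<rightarrow>\<^sub>E {0..<n}"], auto intro: finite_PiE)

lemma Zs_card: "card (Zs n) \<le> n ^ length vs"
proof -
  have "card (Zs n) \<le> card {c \<in> {0..<length vs} \<rightarrow>\<^sub>E {0..<n}. inj_on c {0..<length vs}}"
    unfolding Zs_def by (rule card_image_le) (rule finite_subset[of _ "{0..<length vs} \<rightarrow>\<^sub>E {0..<n}"], auto intro: finite_PiE)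
  also have "\<dots> \<le> card ({0..<length vs} \<rightarrow>\<^sub>E {0..<n})" by (rule card_mono) (auto intro: finite_PiE)
  also have "\<dots> = n ^ length vs" by (simp add: card_PiE)
  finally show ?thesis .
qed

lemma Hc_has_Z: assumes "D \<in> Hc n" shows "\<exists>Z\<in>Zs n. Z \<subseteq> D"
proof -
  obtain g where g: "D = emb g" "inj_on g VF" "g ` VF \<subseteq> {0..<n}" using assms unfolding Hc_def by auto
  let ?L = "length vs"
  define c where "c = restrict (\<lambda>i. g (vs ! i)) {0..<?L}"
  have vsV: "vs ! i \<in> VF" if "i < ?L" for i using svs that by auto
  have c1: "c \<in> {0..<?L} \<rightarrow>\<^sub>E {0..<n}" unfolding c_def using g(3) vsV by auto
  have c2: "inj_on c {0..<?L}"
  proof (rule inj_onI)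
    fix i j assume i: "i \<in> {0..<?L}" and j: "j \<in> {0..<?L}" and "c i = c j"
    hence "g (vs ! i) = g (vs ! j)" unfolding c_def by simp
    hence "vs ! i = vs ! j" using inj_on_eq_iff[OF g(2)] vsV i j by auto
    thus "i = j" using dist i j nth_eq_iff_index_eq by auto
  qed
  have "cyc c \<subseteq> D"
  proof
    fix e assume "e \<in> cyc c"
    then obtain i where i: "i < ?L" "e = {c i, c ((i+1) mod ?L)}" unfolding cyc_def by auto
    have mL: "(i+1) mod ?L < ?L" by (rule mod_less_divisor) (use len in linarith)
    have "e = g ` {vs ! i, vs ! ((i+1) mod ?L)}" using i mL unfolding c_def by simp
    moreover have "{vs ! i, vs ! ((i+1) mod ?L)} \<in> EF" using cedge i by blast
    ultimately show "e \<in> D" unfolding g(1) emb_def by blast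
  qed
  moreover have "cyc c \<in> Zs n" unfolding Zs_def using c1 c2 by blast
  ultimately show ?thesis by blast
qed

lemma ex_lower:
  assumes d: "1 \<le> d" and n2: "2 \<le> n" and nL: "length vs \<le> n" and nd: "4 * d + 1 \<le> n"
    and big: "(8 * d) ^ length vs \<le> d * n"
  shows "d * n \<le> ex_num n VF EF"
proof -
  let ?L = "length vs"
  define P where "P = vpairs {0..<n}"
  define M where "M = card P"
  define m where "m = 2 * d * n"
  have fP: "finite P" unfolding P_def by (rule finite_vpairs) simp
  have M2: "2 * M = n * (n - 1)" unfolding M_def P_def using card_vpairs[of "{0..<n}"] two_choose2 by simp
  have "1 * n \<le> (2 * d) * n" by (rule mult_le_mono1) (use d in simp)
  hence lm: "?L \<le> m" unfolding m_def using nL by linarith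
  have mM: "m \<le> M"
  proof -
    have "4 * d \<le> n - 1" using nd by simp
    hence "n * (4 * d) \<le> n * (n - 1)" by (rule mult_le_mono2)
    hence "2 * (2 * d * n) \<le> 2 * M" using M2 by (simp add: mult.commute mult.left_commute)
    thus ?thesis unfolding m_def by simp
  qed
  have ZsP: "\<forall>Z\<in>Zs n. Z \<subseteq> P \<and> card Z = ?L" using Zs_props unfolding P_def by blast
  obtain G where G: "G \<subseteq> P" "card G = m" and GX: "card {Z\<in>Zs n. Z \<subseteq> G} * M ^ ?L \<le> card (Zs n) * m ^ ?L"
    using deletion_count[OF fP ZsP Zs_finite lm] mM unfolding M_def by blast
  define X where "X = card {Z\<in>Zs n. Z \<subseteq> G}"
  have nn: "n * n \<le> 4 * M"
  proof -
    have "n \<le> 2 * (n - 1)" using n2 by simp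
    hence "n * n \<le> n * (2 * (n - 1))" by (rule mult_le_mono2)
    moreover have "4 * M = n * (2 * (n - 1))"
    proof -
      have "4 * M = 2 * (2 * M)" by simp
      also have "\<dots> = 2 * (n * (n - 1))" using M2 by simp
      also have "\<dots> = n * (2 * (n - 1))" by simp
      finally show ?thesis .
    qed
    ultimately show ?thesis by linarith
  qed
  have X8: "X \<le> (8 * d) ^ ?L"
  proof -
    have "(n * n) ^ ?L \<le> (4 * M) ^ ?L" by (rule power_mono[OF nn]) simp
    hence "X * (n * n) ^ ?L \<le> X * (4 * M) ^ ?L" by (rule mult_le_mono2)
    also have "\<dots> = 4 ^ ?L * (X * M ^ ?L)" by (simp add: power_mult_distrib)
    also have "\<dots> \<le> 4 ^ ?L * (n ^ ?L * m ^ ?L)"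
    proof -
      have "card (Zs n) * m ^ ?L \<le> n ^ ?L * m ^ ?L" using Zs_card[of n] by (rule mult_le_mono1)
      hence "X * M ^ ?L \<le> n ^ ?L * m ^ ?L" using GX unfolding X_def by linarith
      thus ?thesis by (rule mult_le_mono2)
    qed
    also have "\<dots> = (8 * d) ^ ?L * (n * n) ^ ?L"
    proof -
      have "4 * (n * m) = (8 * d) * (n * n)" unfolding m_def by simp
      hence e: "(4 * (n * m)) ^ ?L = ((8 * d) * (n * n)) ^ ?L" by (simp only:)
      have e1: "4 ^ ?L * (n ^ ?L * m ^ ?L) = (4 * (n * m)) ^ ?L" by (simp only: power_mult_distrib)
      have e2: "((8 * d) * (n * n)) ^ ?L = (8 * d) ^ ?L * (n * n) ^ ?L" by (simp only: power_mult_distrib)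
      show ?thesis using e e1 e2 by (simp only:)
    qed
    finally have "X * (n * n) ^ ?L \<le> (8 * d) ^ ?L * (n * n) ^ ?L" .
    moreover have "0 < (n * n) ^ ?L" using n2 by simp
    ultimately show ?thesis using mult_le_cancel2 by blast
  qed
  define pick where "pick Z = (SOME e. e \<in> Z)" for Z :: "nat set set"
  define S where "S = pick ` {Z\<in>Zs n. Z \<subseteq> G}"
  define G' where "G' = G - S"
  have fZG: "finite {Z\<in>Zs n. Z \<subseteq> G}" using Zs_finite by simp
  have cS: "card S \<le> X" unfolding S_def X_def by (rule card_image_le[OF fZG])
  have fS: "finite S" unfolding S_def using fZG by simp
  have cG': "card G - card S \<le> card G'" unfolding G'_def by (rule diff_card_le_card_Diff[OF fS])
  have "{D \<in> Hc n. D \<subseteq> G'} = {}"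
  proof (rule ccontr)
    assume "{D \<in> Hc n. D \<subseteq> G'} \<noteq> {}"
    then obtain D where D: "D \<in> Hc n" "D \<subseteq> G'" by blast
    obtain Z where Z: "Z \<in> Zs n" "Z \<subseteq> D" using Hc_has_Z[OF D(1)] by blast
    have "card Z = ?L" using Zs_props[OF Z(1)] by simp
    hence "Z \<noteq> {}" using len by auto
    hence pZ: "pick Z \<in> Z" unfolding pick_def by (simp add: some_in_eq)
    have "Z \<subseteq> G" using Z D unfolding G'_def by blast
    hence "pick Z \<in> S" unfolding S_def using Z(1) by blast
    moreover have "pick Z \<in> G'" using pZ Z D by blast
    ultimately show False unfolding G'_def by blast
  qed
  hence "cnt n G' = 0" unfolding cnt_def by (simp only: card.empty)
  moreover have "G' \<subseteq> vpairs {0..<n}" using G unfolding G'_def P_def by blast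
  ultimately have "card G' \<le> ex_num n VF EF" using ex_props by blast
  moreover have "d * n \<le> m - X" unfolding m_def using X8 big by simp
  ultimately show ?thesis using cG' cS G(2) by linarith
qed

end

context FGc begin

lemma key_est:
  assumes d: "1 \<le> d" and n2: "2 \<le> n" and nL: "length vs \<le> n" and nd: "4 * d + 1 \<le> n"
    and big: "(8 * d) ^ length vs \<le> d * n" and v: "card VF \<le> n"
  shows "real d * real n \<le> real (ex_num n VF EF)"
    and "\<bar>real (n choose 2) - real (Lgame n VF EF) - real (ex_num n VF EF)\<bar> \<le> (2 * real (card VF) + 1) * real n"
proof -
  have "d * n \<le> ex_num n VF EF" by (rule ex_lower[OF d n2 nL nd big])
  thus "real d * real n \<le> real (ex_num n VF EF)" by (metis of_nat_le_iff of_nat_mult)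
  have b1: "n choose 2 \<le> Lgame n VF EF + exa1 n VF EF" using game_bounds(1)[OF v] .
  have b2: "Lgame n VF EF + exa1 n VF EF \<le> (n choose 2) + card VF * n" using game_bounds(2)[OF v] .
  have b3: "exa1 n VF EF \<le> ex_num n VF EF + 1" using exa1_le_ex[OF v] .
  have b4: "ex_num n VF EF \<le> exa1 n VF EF + card VF * n" using ex_le_exa1[OF v] .
  have r1: "real (n choose 2) \<le> real (Lgame n VF EF) + real (exa1 n VF EF)" using b1 by (metis of_nat_add of_nat_le_iff)
  have r2: "real (Lgame n VF EF) + real (exa1 n VF EF) \<le> real (n choose 2) + real (card VF) * real n"
    using b2 by (metis of_nat_add of_nat_le_iff of_nat_mult)
  have r3: "real (exa1 n VF EF) \<le> real (ex_num n VF EF) + 1" using b3 by (metis of_nat_1 of_nat_add of_nat_le_iff)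
  have r4: "real (ex_num n VF EF) \<le> real (exa1 n VF EF) + real (card VF) * real n"
    using b4 by (metis of_nat_add of_nat_le_iff of_nat_mult)
  have n1: "1 \<le> real n" using n2 by simp
  have vn: "0 \<le> real (card VF) * real n" by simp
  show "\<bar>real (n choose 2) - real (Lgame n VF EF) - real (ex_num n VF EF)\<bar> \<le> (2 * real (card VF) + 1) * real n"
    using r1 r2 r3 r4 n1 vn by (simp add: abs_le_iff algebra_simps)
qed

end

theorem proposition4p1:
  fixes VF :: "'b set" and EF :: "'b set set"
  assumes "simple_graph VF EF" and "graph_connected VF EF" and "EF \<noteq> {}"
  shows "(\<forall>\<^sub>F n in sequentially. n choose 2 \<le> Lgame n VF EF + exa1 n VF EF)
    \<and> (\<exists>C::real. \<forall>\<^sub>F n in sequentially.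
          real (Lgame n VF EF + exa1 n VF EF) \<le> real (n choose 2) + C * real n)
    \<and> (\<not> is_tree VF EF \<longrightarrow>
         (\<exists>g :: nat \<Rightarrow> real. g \<longlonglongrightarrow> 0 \<and> (\<forall>\<^sub>F n in sequentially.
            real (Lgame n VF EF) = real (n choose 2) - (1 + g n) * real (ex_num n VF EF))))"
proof -
  interpret FG VF EF
    by unfold_locales (use assms in \<open>auto simp: simple_graph_def\<close>)
  let ?v = "card VF"
  have P1: "\<forall>\<^sub>F n in sequentially. n choose 2 \<le> Lgame n VF EF + exa1 n VF EF"
    unfolding eventually_sequentially using game_bounds(1) by blast
  have P2: "\<forall>\<^sub>F n in sequentially.
          real (Lgame n VF EF + exa1 n VF EF) \<le> real (n choose 2) + real ?v * real n"
    unfolding eventually_sequentially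
  proof (intro exI allI impI)
    fix n assume "?v \<le> n"
    hence "Lgame n VF EF + exa1 n VF EF \<le> (n choose 2) + ?v * n" by (rule game_bounds(2))
    thus "real (Lgame n VF EF + exa1 n VF EF) \<le> real (n choose 2) + real ?v * real n"
      by (metis of_nat_add of_nat_le_iff of_nat_mult)
  qed
  have P3: "\<exists>g :: nat \<Rightarrow> real. g \<longlonglongrightarrow> 0 \<and> (\<forall>\<^sub>F n in sequentially.
            real (Lgame n VF EF) = real (n choose 2) - (1 + g n) * real (ex_num n VF EF))"
    if nt: "\<not> is_tree VF EF"
  proof -
    have "has_cycle VF EF" using nt assms(2) unfolding is_tree_def by blast
    then obtain vs where vs: "3 \<le> length vs" "distinct vs" "set vs \<subseteq> VF"
      "\<forall>i < length vs. {vs ! i, vs ! ((i + 1) mod length vs)} \<in> EF"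
      unfolding has_cycle_def by blast
    interpret FGc VF EF vs by unfold_locales (use vs in auto)
    define Nd where "Nd d = 2 + length vs + (4 * d + 1) + (8 * d) ^ length vs + ?v" for d :: nat
    have est: "real d * real n \<le> real (ex_num n VF EF) \<and>
      \<bar>real (n choose 2) - real (Lgame n VF EF) - real (ex_num n VF EF)\<bar> \<le> (2 * real ?v + 1) * real n"
      if d: "1 \<le> d" and n: "Nd d \<le> n" for d n
    proof -
      have n2: "2 \<le> n" "length vs \<le> n" "4 * d + 1 \<le> n" "?v \<le> n" "(8 * d) ^ length vs \<le> n"
        using n unfolding Nd_def by auto
      have "n \<le> d * n" using d by simp
      hence big: "(8 * d) ^ length vs \<le> d * n" using n2(5) by linarith
      show ?thesis using key_est[OF d n2(1) n2(2) n2(3) big n2(4)] by blast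
    qed
    define g where "g n = (real (n choose 2) - real (Lgame n VF EF)) / real (ex_num n VF EF) - 1" for n
    have ev: "\<forall>\<^sub>F n in sequentially.
            real (Lgame n VF EF) = real (n choose 2) - (1 + g n) * real (ex_num n VF EF)"
      unfolding eventually_sequentially
    proof (intro exI allI impI)
      fix n assume n: "Nd 1 \<le> n"
      have "real 1 * real n \<le> real (ex_num n VF EF)" using est[OF _ n] by simp
      moreover have "1 \<le> n" using n unfolding Nd_def by simp
      ultimately have pos: "0 < real (ex_num n VF EF)" by simp
      show "real (Lgame n VF EF) = real (n choose 2) - (1 + g n) * real (ex_num n VF EF)"
        unfolding g_def using pos by (simp add: field_simps)
    qed
    have lim: "g \<longlonglongrightarrow> 0"
    proof (rule LIMSEQ_I)
      fix r :: real assume r: "0 < r"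
      define d where "d = nat \<lceil>(2 * real ?v + 2) / r\<rceil> + 1"
      have d1: "1 \<le> d" unfolding d_def by simp
      have "(2 * real ?v + 2) / r \<le> real (nat \<lceil>(2 * real ?v + 2) / r\<rceil>)" by linarith
      hence dr: "(2 * real ?v + 2) / r \<le> real d" unfolding d_def by simp
      hence rd: "2 * real ?v + 2 \<le> r * real d" using r by (simp add: field_simps)
      show "\<exists>no. \<forall>n\<ge>no. norm (g n - 0) < r"
      proof (intro exI allI impI)
        fix n assume n: "Nd d \<le> n"
        have E: "real d * real n \<le> real (ex_num n VF EF)"
          and A: "\<bar>real (n choose 2) - real (Lgame n VF EF) - real (ex_num n VF EF)\<bar> \<le> (2 * real ?v + 1) * real n"
          using est[OF d1 n] by auto
        have n1: "1 \<le> real n" using n unfolding Nd_def by simp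
        have dpos: "0 < real d" using d1 by simp
        have ex_pos: "0 < real (ex_num n VF EF)" using E n1 dpos
          by (smt (verit) mult_le_cancel_left1)
        have "g n = (real (n choose 2) - real (Lgame n VF EF) - real (ex_num n VF EF)) / real (ex_num n VF EF)"
          unfolding g_def using ex_pos by (simp add: field_simps)
        hence "\<bar>g n\<bar> = \<bar>real (n choose 2) - real (Lgame n VF EF) - real (ex_num n VF EF)\<bar> / real (ex_num n VF EF)"
          using ex_pos by simp
        also have "\<dots> \<le> (2 * real ?v + 1) * real n / real (ex_num n VF EF)"
          using A ex_pos by (simp add: divide_right_mono)
        also have "\<dots> \<le> (2 * real ?v + 1) * real n / (real d * real n)"
        proof (rule divide_left_mono[OF E])
          show "0 \<le> (2 * real ?v + 1) * real n" using n1 by simp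
          have "0 < real d * real n" using dpos n1 by simp
          thus "0 < real (ex_num n VF EF) * (real d * real n)" using ex_pos by simp
        qed
        also have "\<dots> = (2 * real ?v + 1) / real d" using n1 by simp
        also have "\<dots> < r" using rd dpos by (simp add: field_simps)
        finally show "norm (g n - 0) < r" by simp
      qed
    qed
    show ?thesis using lim ev by blast
  qed
  show ?thesis using P1 P2 P3 by blast
qed

end
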